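(* Let $k>0$ be an integer and let $a_0,a_1,\ldots,a_k$ be fixed integers with $a_j\neq 0$ for at least one $j\in\{1,\ldots,k\}$. For $n>k$ let $P_{2n}(x)=x^n\big(x^n+a_0+x^{-n}+\sum_{j=1}^k a_j(x^j+x^{-j})\big)$ and let $f_2(t)=-\frac{a_0}{2}-\sum_{j=1}^k a_j\cos(jt)$. Then $$\lim_{n\to\infty} C(P_{2n})=\frac{1}{2\pi}\,\lambda\big(\{t\in[0,2\pi]: |f_2(t)|\ge 1\}\big),$$ where $\lambda$ denotes Lebesgue measure. Equivalently, if $0=t_0<t_1<\cdots<t_p=2\pi$ are $0$, $2\pi$ and all solutions in $(0,2\pi)$ of $f_2(t)=\pm1$, and $J$ is the set of indices $j$ with $|f_2(t)|<1$ on $(t_{j-1},t_j)$, then $\lim_{n\to\infty}C(P_{2n})=1-\sum_{j\in J}\frac{t_j-t_{j-1}}{2\pi}$.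
   Context: For a polynomial $P$ of degree $d$, let $I(P)$, $U(P)$, $E(P)$ denote the numbers of complex zeros of $P$ (counted with multiplicity) of modulus $<1$, $=1$, $>1$ respectively. For the degree-$2n$ polynomial $P_{2n}$, $C(P_{2n})=\frac{I(P_{2n})+E(P_{2n})}{2n}$. *)

theory Defs
  imports "HOL-Analysis.Analysis" "HOL-Computational_Algebra.Polynomial"
begin

definition zeros_inside :: "complex poly \<Rightarrow> nat" where
  "zeros_inside p = size (filter_mset (\<lambda>z. cmod z < 1) (proots p))"

definition zeros_on :: "complex poly \<Rightarrow> nat" where
  "zeros_on p = size (filter_mset (\<lambda>z. cmod z = 1) (proots p))"

definition zeros_outside :: "complex poly \<Rightarrow> nat" where
  "zeros_outside p = size (filter_mset (\<lambda>z. cmod z > 1) (proots p))"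

text \<open>P_{2n}(x) = x^{2n} + a_0 x^n + 1 + sum_{j=1}^k a_j (x^{n+j} + x^{n-j});
  this is the intended polynomial for n > k (for n <= k the truncated
  subtraction gives some irrelevant polynomial).\<close>
definition P2n :: "nat \<Rightarrow> (nat \<Rightarrow> int) \<Rightarrow> nat \<Rightarrow> complex poly" where
  "P2n k a n = monom 1 (2*n) + monom (of_int (a 0)) n + 1
     + (\<Sum>j\<in>{1..k}. monom (of_int (a j)) (n + j) + monom (of_int (a j)) (n - j))"

definition f2 :: "nat \<Rightarrow> (nat \<Rightarrow> int) \<Rightarrow> real \<Rightarrow> real" where
  "f2 k a t = - real_of_int (a 0) / 2 - (\<Sum>j\<in>{1..k}. real_of_int (a j) * cos (real j * t))"

definition Cratio :: "nat \<Rightarrow> complex poly \<Rightarrow> real" where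
  "Cratio n p = real (zeros_inside p + zeros_outside p) / real (2*n)"

end

theory Submission
  imports Defs "HOL-Computational_Algebra.Fundamental_Theorem_Algebra"
begin

lemma cis_pm: "cis a + cis (-a) = complex_of_real (2 * cos a)"
  by (simp add: complex_eq_iff)
lemma poly_P_cis:
  assumes "n > k"
  shows "poly (P2n k a n) (cis t) = 2 * cis (real n * t) * complex_of_real (cos (real n * t) - f2 k a t)"
proof -
  have tm: "of_int (a j) * cis t ^ (n + j) + of_int (a j) * cis t ^ (n - j)
      = cis (real n * t) * complex_of_real (2 * of_int (a j) * cos (real j * t))" if "j \<in> {1..k}" for j
  proof -
    have jn: "j \<le> n" using that assms by auto
    have "cis t ^ (n + j) = cis (real n * t) * cis (real j * t)"
      unfolding Complex.DeMoivre cis_mult by (simp add: algebra_simps)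
    moreover have "cis t ^ (n - j) = cis (real n * t) * cis (- (real j * t))"
      using jn unfolding Complex.DeMoivre cis_mult by (simp add: of_nat_diff algebra_simps)
    ultimately have "of_int (a j) * cis t ^ (n + j) + of_int (a j) * cis t ^ (n - j)
       = cis (real n * t) * (of_int (a j) * (cis (real j * t) + cis (- (real j * t))))"
      by (simp add: algebra_simps)
    also have "\<dots> = cis (real n * t) * complex_of_real (2 * of_int (a j) * cos (real j * t))"
      by (subst cis_pm) simp
    finally show ?thesis .
  qed
  have h0: "cis t ^ (2*n) + of_int (a 0) * cis t ^ n + 1
      = cis (real n * t) * complex_of_real (2 * cos (real n * t) + of_int (a 0))"
  proof -
    have "cis t ^ (2*n) = cis (real n * t) * cis (real n * t)" unfolding Complex.DeMoivre cis_mult by (simp add: algebra_simps)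
    moreover have "(1::complex) = cis (real n * t) * cis (- (real n * t))" by (simp add: cis_mult)
    moreover have "cis t ^ n = cis (real n * t)" by (rule Complex.DeMoivre)
    ultimately have "cis t ^ (2*n) + of_int (a 0) * cis t ^ n + 1
       = cis (real n * t) * ((cis (real n * t) + cis (- (real n * t))) + of_int (a 0))"
      by (simp add: algebra_simps)
    also have "\<dots> = cis (real n * t) * complex_of_real (2 * cos (real n * t) + of_int (a 0))"
      by (subst cis_pm) simp
    finally show ?thesis .
  qed
  have "poly (P2n k a n) (cis t) = (cis t ^ (2*n) + of_int (a 0) * cis t ^ n + 1)
      + (\<Sum>j\<in>{1..k}. of_int (a j) * cis t ^ (n + j) + of_int (a j) * cis t ^ (n - j))"
    by (simp add: P2n_def poly_sum poly_monom)
  also have "\<dots> = cis (real n * t) * complex_of_real (2 * cos (real n * t) + of_int (a 0))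
      + (\<Sum>j\<in>{1..k}. cis (real n * t) * complex_of_real (2 * of_int (a j) * cos (real j * t)))"
    using h0 by (simp only: sum.cong[OF refl tm])
  also have "\<dots> = cis (real n * t) * complex_of_real (2 * cos (real n * t) + of_int (a 0)
      + (\<Sum>j\<in>{1..k}. 2 * of_int (a j) * cos (real j * t)))"
    by (simp add: sum_distrib_left distrib_left)
  also have "\<dots> = 2 * cis (real n * t) * complex_of_real (cos (real n * t) - f2 k a t)"
    by (simp add: f2_def sum_distrib_left algebra_simps)
  finally show ?thesis .
qed

lemma coeff_P_top: assumes "n > k" shows "coeff (P2n k a n) (2*n) = 1"
proof -
  have "(\<Sum>j\<in>{1..k}. coeff (monom (of_int (a j)) (n + j)) (2*n) + coeff (monom (of_int (a j)) (n - j)) (2*n)) = (0::complex)"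
    using assms by (intro sum.neutral) (auto simp: coeff_monom)
  then show ?thesis using assms by (simp add: P2n_def coeff_sum coeff_monom)
qed

lemma coeff_P_high: assumes "n > k" "m > 2*n" shows "coeff (P2n k a n) m = 0"
proof -
  have "(\<Sum>j\<in>{1..k}. coeff (monom (of_int (a j)) (n + j)) m + coeff (monom (of_int (a j)) (n - j)) m) = (0::complex)"
    using assms by (intro sum.neutral) (auto simp: coeff_monom)
  then show ?thesis using assms by (simp add: P2n_def coeff_sum coeff_monom)
qed

lemma degree_P: assumes "n > k" shows "degree (P2n k a n) = 2*n"
proof (rule antisym)
  show "degree (P2n k a n) \<le> 2*n" using coeff_P_high[OF assms] by (intro degree_le) auto
  show "2*n \<le> degree (P2n k a n)" using coeff_P_top[OF assms] by (intro le_degree) auto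
qed

lemma P_nonzero: assumes "n > k" shows "P2n k a n \<noteq> 0"
  using coeff_P_top[OF assms, of a] by auto

lemma size_filter_sum: "size (filter_mset Q M) = sum (count M) {x\<in>set_mset M. Q x}"
  by (subst size_multiset_overloaded_eq) (auto intro!: sum.cong)

lemma three_parts: "zeros_inside p + zeros_outside p + zeros_on p = size (proots p)"
proof -
  let ?M = "proots p"
  have "size ?M = size (filter_mset (\<lambda>z. cmod z < 1) ?M) + size (filter_mset (\<lambda>z. \<not> cmod z < 1) ?M)"
    using multiset_partition[of ?M "\<lambda>z. cmod z < 1"] by (metis size_union)
  moreover have "size (filter_mset (\<lambda>z. \<not> cmod z < 1) ?M) =
     size (filter_mset (\<lambda>z. cmod z = 1) (filter_mset (\<lambda>z. \<not> cmod z < 1) ?M))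
   + size (filter_mset (\<lambda>z. \<not> cmod z = 1) (filter_mset (\<lambda>z. \<not> cmod z < 1) ?M))"
    using multiset_partition[of "filter_mset (\<lambda>z. \<not> cmod z < 1) ?M" "\<lambda>z. cmod z = 1"] by (metis size_union)
  moreover have "filter_mset (\<lambda>z. cmod z = 1) (filter_mset (\<lambda>z. \<not> cmod z < 1) ?M) = filter_mset (\<lambda>z. cmod z = 1) ?M"
    by (simp add: filter_filter_mset) (rule filter_mset_cong, auto)
  moreover have "filter_mset (\<lambda>z. \<not> cmod z = 1) (filter_mset (\<lambda>z. \<not> cmod z < 1) ?M) = filter_mset (\<lambda>z. cmod z > 1) ?M"
    by (simp add: filter_filter_mset) (rule filter_mset_cong, auto)
  ultimately show ?thesis unfolding zeros_inside_def zeros_outside_def zeros_on_def by simp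
qed

lemma root_iff: assumes "n > k" shows "poly (P2n k a n) (cis t) = 0 \<longleftrightarrow> cos (real n * t) = f2 k a t"
  using poly_P_cis[OF assms, of a t] by (simp add: cis_neq_zero)

lemma cis_onto: assumes "cmod z = 1" shows "\<exists>t. 0 \<le> t \<and> t < 2*pi \<and> z = cis t"
  using Arg2pi[of z] assms unfolding is_Arg_def by (auto simp: cis_conv_exp)

lemma cis_inj: "inj_on cis {0..<2*pi}"
proof (rule inj_onI)
  fix s t assume s: "s \<in> {0..<2*pi}" and t: "t \<in> {0..<2*pi}" and e: "cis s = cis t"
  have "Arg2pi (cis t) = s" using s e by (intro Arg2pi_unique[of 1]) (auto simp: cis_conv_exp)
  moreover have "Arg2pi (cis t) = t" using t by (intro Arg2pi_unique[of 1]) (auto simp: cis_conv_exp)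
  ultimately show "s = t" by simp
qed

definition Tset :: "nat \<Rightarrow> (nat \<Rightarrow> int) \<Rightarrow> nat \<Rightarrow> real set" where
  "Tset k a n = {t. 0 \<le> t \<and> t < 2*pi \<and> cos (real n * t) = f2 k a t}"

lemma zeros_on_sum: assumes "n > k"
  shows "zeros_on (P2n k a n) = (\<Sum>t\<in>Tset k a n. order (cis t) (P2n k a n))"
proof -
  let ?P = "P2n k a n"
  have nz: "?P \<noteq> 0" using P_nonzero[OF assms] .
  have "zeros_on ?P = sum (count (proots ?P)) {z\<in>set_mset (proots ?P). cmod z = 1}"
    unfolding zeros_on_def by (rule size_filter_sum)
  also have "{z\<in>set_mset (proots ?P). cmod z = 1} = cis ` Tset k a n"
  proof
    show "{z\<in>set_mset (proots ?P). cmod z = 1} \<subseteq> cis ` Tset k a n"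
    proof
      fix z assume "z \<in> {z\<in>set_mset (proots ?P). cmod z = 1}"
      then have z: "poly ?P z = 0" "cmod z = 1" using nz by auto
      obtain t where t: "0 \<le> t" "t < 2*pi" "z = cis t" using cis_onto[OF z(2)] by blast
      then show "z \<in> cis ` Tset k a n" using z(1) root_iff[OF assms] unfolding Tset_def by auto
    qed
    show "cis ` Tset k a n \<subseteq> {z\<in>set_mset (proots ?P). cmod z = 1}"
      using nz root_iff[OF assms] unfolding Tset_def by auto
  qed
  also have "sum (count (proots ?P)) (cis ` Tset k a n) = (\<Sum>t\<in>Tset k a n. order (cis t) ?P)"
  proof (subst sum.reindex)
    show "inj_on cis (Tset k a n)" by (rule inj_on_subset[OF cis_inj]) (auto simp: Tset_def)
  qed (use nz in simp)
  finally show ?thesis .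
qed

lemma finite_Tset: assumes "n > k" shows "finite (Tset k a n)"
proof -
  have "cis ` Tset k a n \<subseteq> {z. poly (P2n k a n) z = 0}" using root_iff[OF assms] unfolding Tset_def by auto
  then have "finite (cis ` Tset k a n)" using poly_roots_finite[OF P_nonzero[OF assms]] finite_subset by blast
  then show ?thesis using finite_imageD inj_on_subset[OF cis_inj] unfolding Tset_def by (metis (no_types, lifting) atLeastLessThan_iff mem_Collect_eq subsetI)
qed

lemma Cratio_eq: assumes "n > k"
  shows "Cratio n (P2n k a n) = 1 - real (zeros_on (P2n k a n)) / (2 * real n)"
proof -
  have "zeros_inside (P2n k a n) + zeros_outside (P2n k a n) + zeros_on (P2n k a n) = 2*n"
    using three_parts[of "P2n k a n"] size_proots_complex degree_P[OF assms] by simp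
  then have "real (zeros_inside (P2n k a n) + zeros_outside (P2n k a n)) = 2 * real n - real (zeros_on (P2n k a n))"
    by linarith
  then show ?thesis using assms unfolding Cratio_def by (simp add: field_simps)
qed

definition f2d :: "nat \<Rightarrow> (nat \<Rightarrow> int) \<Rightarrow> real \<Rightarrow> real" where
  "f2d k a t = (\<Sum>j\<in>{1..k}. real j * real_of_int (a j) * sin (real j * t))"
definition f2dd :: "nat \<Rightarrow> (nat \<Rightarrow> int) \<Rightarrow> real \<Rightarrow> real" where
  "f2dd k a t = (\<Sum>j\<in>{1..k}. (real j)^2 * real_of_int (a j) * cos (real j * t))"

lemma lin_sum:
  fixes L :: "'a::comm_monoid_add \<Rightarrow> 'b::comm_monoid_add"
  assumes add: "\<And>p q. L (p+q) = L p + L q" and zero: "L 0 = 0"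
  shows "L (sum f A) = (\<Sum>x\<in>A. L (f x))"
proof (cases "finite A")
  case True then show ?thesis by (induction A rule: finite_induct) (auto simp: add zero)
qed (simp add: zero)

lemma lin_P:
  fixes L :: "complex poly \<Rightarrow> complex" and h :: "nat \<Rightarrow> complex"
  assumes add: "\<And>p q. L (p+q) = L p + L q" and zero: "L 0 = 0"
    and mon: "\<And>c m. L (monom c m) = h m * c * z^m"
  shows "L (P2n k a n) = h (2*n) * z^(2*n) + h n * of_int (a 0) * z^n + h 0
     + (\<Sum>j\<in>{1..k}. h (n+j) * of_int (a j) * z^(n+j) + h (n-j) * of_int (a j) * z^(n-j))"
proof -
  have "(1::complex poly) = monom 1 0" by simp
  then have "L 1 = h 0" using mon[of 1 0] by simp
  moreover have "L (\<Sum>j\<in>{1..k}. monom (of_int (a j)) (n + j) + monom (of_int (a j)) (n - j))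
     = (\<Sum>j\<in>{1..k}. h (n+j) * of_int (a j) * z^(n+j) + h (n-j) * of_int (a j) * z^(n-j))"
    by (subst lin_sum[of L, OF add zero]) (simp add: add mon)
  ultimately show ?thesis unfolding P2n_def by (simp add: add mon)
qed

lemma pd1_monom: "z * poly (pderiv (monom c m)) z = of_nat m * c * z ^ m"
  by (cases m) (auto simp: pderiv_monom poly_monom algebra_simps)

lemma pd2_monom: "z^2 * poly (pderiv (pderiv (monom c m))) z + z * poly (pderiv (monom c m)) z
   = (of_nat m)^2 * c * z ^ m"
proof (cases m)
  case 0 then show ?thesis by (simp add: pderiv_monom)
next
  case (Suc m')
  then show ?thesis
  proof (cases m')
    case 0 with Suc show ?thesis by (simp add: pderiv_monom poly_monom mult.commute)
  next
    case (Suc m'')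
    with \<open>m = Suc m'\<close> show ?thesis by (simp add: pderiv_monom poly_monom power2_eq_square algebra_simps)
  qed
qed

lemma S1_eval: assumes "n > k"
  shows "cis t * poly (pderiv (P2n k a n)) (cis t) =
    2 * cis (real n * t) * (of_nat n * (cis (real n * t) - complex_of_real (f2 k a t)) + \<i> * complex_of_real (f2d k a t))"
proof -
  let ?w = "cis (real n * t)"
  have L: "cis t * poly (pderiv (P2n k a n)) (cis t) = of_nat (2*n) * cis t^(2*n) + of_nat n * of_int (a 0) * cis t^n + of_nat 0
     + (\<Sum>j\<in>{1..k}. of_nat (n+j) * of_int (a j) * cis t^(n+j) + of_nat (n-j) * of_int (a j) * cis t^(n-j))"
    by (rule lin_P[where L="\<lambda>p. cis t * poly (pderiv p) (cis t)"]) (auto simp: pderiv_add algebra_simps pd1_monom)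
  have tm: "of_nat (n+j) * of_int (a j) * cis t^(n+j) + of_nat (n-j) * of_int (a j) * cis t^(n-j)
     = ?w * (of_nat n * complex_of_real (2 * of_int (a j) * cos (real j * t)) + 2 * \<i> * complex_of_real (real j * of_int (a j) * sin (real j * t)))"
    if "j \<in> {1..k}" for j
  proof -
    have jn: "j \<le> n" using that assms by auto
    have e1: "cis t ^ (n + j) = ?w * cis (real j * t)"
      unfolding Complex.DeMoivre cis_mult by (simp add: algebra_simps)
    have e2: "cis t ^ (n - j) = ?w * cis (- (real j * t))"
      using jn unfolding Complex.DeMoivre cis_mult by (simp add: of_nat_diff algebra_simps)
    show ?thesis unfolding e1 e2 using jn
      by (simp add: of_nat_diff complex_eq_iff cis.sel algebra_simps)
  qed
  have top: "of_nat (2*n) * cis t^(2*n) + of_nat n * of_int (a 0) * cis t^n + of_nat 0 = ?w * (2 * of_nat n * ?w + of_nat n * of_int (a 0))"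
  proof -
    have "cis t ^ (2*n) = ?w * ?w" unfolding Complex.DeMoivre cis_mult by (simp add: algebra_simps)
    moreover have "cis t ^ n = ?w" by (rule Complex.DeMoivre)
    ultimately show ?thesis by (simp add: algebra_simps)
  qed
  have "cis t * poly (pderiv (P2n k a n)) (cis t) = ?w * (2 * of_nat n * ?w + of_nat n * of_int (a 0))
     + (\<Sum>j\<in>{1..k}. ?w * (of_nat n * complex_of_real (2 * of_int (a j) * cos (real j * t)) + 2 * \<i> * complex_of_real (real j * of_int (a j) * sin (real j * t))))"
    unfolding L top by (simp only: sum.cong[OF refl tm])
  also have "\<dots> = 2 * ?w * (of_nat n * (?w - complex_of_real (f2 k a t)) + \<i> * complex_of_real (f2d k a t))"
    by (simp add: f2_def f2d_def sum_distrib_left sum.distrib algebra_simps)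
  finally show ?thesis .
qed


lemma T2_eval: assumes "n > k"
  shows "(cis t)^2 * poly (pderiv (pderiv (P2n k a n))) (cis t) + cis t * poly (pderiv (P2n k a n)) (cis t) =
    cis (real n * t) * ((of_nat n)^2 * (4 * cis (real n * t) - 2 * complex_of_real (f2 k a t))
      + 2 * complex_of_real (f2dd k a t) + 4 * \<i> * of_nat n * complex_of_real (f2d k a t))"
proof -
  let ?w = "cis (real n * t)"
  have L: "(cis t)^2 * poly (pderiv (pderiv (P2n k a n))) (cis t) + cis t * poly (pderiv (P2n k a n)) (cis t)
     = (of_nat (2*n))^2 * cis t^(2*n) + (of_nat n)^2 * of_int (a 0) * cis t^n + (of_nat 0)^2
     + (\<Sum>j\<in>{1..k}. (of_nat (n+j))^2 * of_int (a j) * cis t^(n+j) + (of_nat (n-j))^2 * of_int (a j) * cis t^(n-j))"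
    by (rule lin_P[where L="\<lambda>p. (cis t)^2 * poly (pderiv (pderiv p)) (cis t) + cis t * poly (pderiv p) (cis t)"])
       (auto simp: pderiv_add algebra_simps pd2_monom[simplified add.commute])
  have tm: "(of_nat (n+j))^2 * of_int (a j) * cis t^(n+j) + (of_nat (n-j))^2 * of_int (a j) * cis t^(n-j)
     = ?w * ((of_nat n)^2 * complex_of_real (2 * of_int (a j) * cos (real j * t))
        + 2 * complex_of_real ((real j)^2 * of_int (a j) * cos (real j * t))
        + 4 * \<i> * of_nat n * complex_of_real (real j * of_int (a j) * sin (real j * t)))"
    if "j \<in> {1..k}" for j
  proof -
    have jn: "j \<le> n" using that assms by auto
    have e1: "cis t ^ (n + j) = ?w * cis (real j * t)"
      unfolding Complex.DeMoivre cis_mult by (simp add: algebra_simps)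
    have e2: "cis t ^ (n - j) = ?w * cis (- (real j * t))"
      using jn unfolding Complex.DeMoivre cis_mult by (simp add: of_nat_diff algebra_simps)
    show ?thesis unfolding e1 e2 using jn
      by (simp add: of_nat_diff complex_eq_iff cis.sel power2_eq_square algebra_simps)
  qed
  have top: "(of_nat (2*n))^2 * cis t^(2*n) + (of_nat n)^2 * of_int (a 0) * cis t^n + (of_nat 0)^2
      = ?w * (4 * (of_nat n)^2 * ?w + (of_nat n)^2 * of_int (a 0))"
  proof -
    have "cis t ^ (2*n) = ?w * ?w" unfolding Complex.DeMoivre cis_mult by (simp add: algebra_simps)
    moreover have "cis t ^ n = ?w" by (rule Complex.DeMoivre)
    ultimately show ?thesis by (simp add: algebra_simps power2_eq_square)
  qed
  have "(cis t)^2 * poly (pderiv (pderiv (P2n k a n))) (cis t) + cis t * poly (pderiv (P2n k a n)) (cis t)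
     = ?w * (4 * (of_nat n)^2 * ?w + (of_nat n)^2 * of_int (a 0))
     + (\<Sum>j\<in>{1..k}. ?w * ((of_nat n)^2 * complex_of_real (2 * of_int (a j) * cos (real j * t))
        + 2 * complex_of_real ((real j)^2 * of_int (a j) * cos (real j * t))
        + 4 * \<i> * of_nat n * complex_of_real (real j * of_int (a j) * sin (real j * t))))"
    unfolding L top by (simp only: sum.cong[OF refl tm])
  also have "\<dots> = ?w * ((of_nat n)^2 * (4 * ?w - 2 * complex_of_real (f2 k a t))
      + 2 * complex_of_real (f2dd k a t) + 4 * \<i> * of_nat n * complex_of_real (f2d k a t))"
    by (simp add: f2_def f2d_def f2dd_def sum_distrib_left sum.distrib algebra_simps)
  finally show ?thesis .
qed


lemma order_ge2_deriv:
  assumes "n > k" "cos (real n * t) = f2 k a t" "order (cis t) (P2n k a n) \<ge> 2"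
  shows "real n * sin (real n * t) + f2d k a t = 0"
proof -
  let ?P = "P2n k a n"
  have nz: "?P \<noteq> 0" using P_nonzero[OF assms(1)] .
  have r: "poly ?P (cis t) = 0" using root_iff[OF assms(1)] assms(2) by simp
  have "order (cis t) ?P = Suc (order (cis t) (pderiv ?P))" by (rule order_pderiv[OF nz r])
  then have "order (cis t) (pderiv ?P) \<noteq> 0" using assms(3) by simp
  then have "poly (pderiv ?P) (cis t) = 0" using order_root by blast
  then have "2 * cis (real n * t) * (of_nat n * (cis (real n * t) - complex_of_real (f2 k a t)) + \<i> * complex_of_real (f2d k a t)) = 0"
    using S1_eval[OF assms(1), of t a] by simp
  then have "of_nat n * (cis (real n * t) - complex_of_real (f2 k a t)) + \<i> * complex_of_real (f2d k a t) = 0"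
    by (simp add: cis_neq_zero)
  then have "Im (of_nat n * (cis (real n * t) - complex_of_real (f2 k a t)) + \<i> * complex_of_real (f2d k a t)) = 0"
    by simp
  then show ?thesis by simp
qed

lemma order_ge3_deriv:
  assumes "n > k" "cos (real n * t) = f2 k a t" "order (cis t) (P2n k a n) \<ge> 3"
  shows "(real n)^2 * f2 k a t + f2dd k a t = 0"
proof -
  let ?P = "P2n k a n"
  have nz: "?P \<noteq> 0" using P_nonzero[OF assms(1)] .
  have r: "poly ?P (cis t) = 0" using root_iff[OF assms(1)] assms(2) by simp
  have o1: "order (cis t) ?P = Suc (order (cis t) (pderiv ?P))" by (rule order_pderiv[OF nz r])
  then have "order (cis t) (pderiv ?P) \<noteq> 0" using assms(3) by simp
  then have r1: "poly (pderiv ?P) (cis t) = 0" using order_root by blast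
  have nz1: "pderiv ?P \<noteq> 0" using degree_P[OF assms(1), of a] assms(1) by (simp add: pderiv_eq_0_iff)
  have "order (cis t) (pderiv ?P) = Suc (order (cis t) (pderiv (pderiv ?P)))" by (rule order_pderiv[OF nz1 r1])
  then have "order (cis t) (pderiv (pderiv ?P)) \<noteq> 0" using assms(3) o1 by simp
  then have r2: "poly (pderiv (pderiv ?P)) (cis t) = 0" using order_root by blast
  have "cis (real n * t) * ((of_nat n)^2 * (4 * cis (real n * t) - 2 * complex_of_real (f2 k a t))
      + 2 * complex_of_real (f2dd k a t) + 4 * \<i> * of_nat n * complex_of_real (f2d k a t)) = 0"
    using T2_eval[OF assms(1), of t a] r1 r2 by simp
  then have "(of_nat n)^2 * (4 * cis (real n * t) - 2 * complex_of_real (f2 k a t))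
      + 2 * complex_of_real (f2dd k a t) + 4 * \<i> * of_nat n * complex_of_real (f2d k a t) = 0"
    by (simp add: cis_neq_zero)
  then have "Re ((of_nat n)^2 * (4 * cis (real n * t) - 2 * complex_of_real (f2 k a t))
      + 2 * complex_of_real (f2dd k a t) + 4 * \<i> * of_nat n * complex_of_real (f2d k a t)) = 0"
    by simp
  then have "(real n)^2 * (4 * cos (real n * t) - 2 * f2 k a t) + 2 * f2dd k a t = 0"
    by (simp add: power2_eq_square)
  then show ?thesis using assms(2) by (simp add: algebra_simps)
qed

definition M1 :: "nat \<Rightarrow> (nat \<Rightarrow> int) \<Rightarrow> real" where
  "M1 k a = (\<Sum>j\<in>{1..k}. real j * \<bar>real_of_int (a j)\<bar>)"
definition M2 :: "nat \<Rightarrow> (nat \<Rightarrow> int) \<Rightarrow> real" where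
  "M2 k a = (\<Sum>j\<in>{1..k}. (real j)^2 * \<bar>real_of_int (a j)\<bar>)"

lemma f2d_bound: "\<bar>f2d k a t\<bar> \<le> M1 k a"
proof -
  have "\<bar>f2d k a t\<bar> \<le> (\<Sum>j\<in>{1..k}. \<bar>real j * real_of_int (a j) * sin (real j * t)\<bar>)"
    unfolding f2d_def by (rule sum_abs)
  also have "\<dots> \<le> M1 k a" unfolding M1_def
    by (intro sum_mono) (auto simp: abs_mult intro!: mult_left_le)
  finally show ?thesis .
qed

lemma f2dd_bound: "\<bar>f2dd k a t\<bar> \<le> M2 k a"
proof -
  have "\<bar>f2dd k a t\<bar> \<le> (\<Sum>j\<in>{1..k}. \<bar>(real j)^2 * real_of_int (a j) * cos (real j * t)\<bar>)"
    unfolding f2dd_def by (rule sum_abs)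
  also have "\<dots> \<le> M2 k a" unfolding M2_def
    by (intro sum_mono) (auto simp: abs_mult intro!: mult_left_le)
  finally show ?thesis .
qed

lemma M1_nonneg: "M1 k a \<ge> 0" unfolding M1_def by (intro sum_nonneg) auto
lemma M2_nonneg: "M2 k a \<ge> 0" unfolding M2_def by (intro sum_nonneg) auto

lemma order_le2:
  assumes "n > k" "real n \<ge> 2 * (M1 k a + M2 k a) + 1"
  shows "order (cis t) (P2n k a n) \<le> 2"
proof (rule ccontr)
  assume A: "\<not> ?thesis"
  have n0: "real n > 0" using assms M1_nonneg[of k a] M2_nonneg[of k a] by linarith
  have root: "cos (real n * t) = f2 k a t"
  proof (rule ccontr)
    assume "cos (real n * t) \<noteq> f2 k a t"
    then have "poly (P2n k a n) (cis t) \<noteq> 0" using root_iff[OF assms(1)] by simp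
    then have "order (cis t) (P2n k a n) = 0" by (simp add: order_0I)
    with A show False by simp
  qed
  have s: "real n * sin (real n * t) = - f2d k a t" using order_ge2_deriv[OF assms(1) root] A by simp
  have c: "(real n)^2 * cos (real n * t) = - f2dd k a t" using order_ge3_deriv[OF assms(1) root] A root by simp
  have s2: "\<bar>sin (real n * t)\<bar> < 1/2"
  proof -
    have "real n * \<bar>sin (real n * t)\<bar> \<le> M1 k a" using s f2d_bound[of k a t] n0 by (simp add: abs_mult)
    moreover have "2 * M1 k a < real n" using assms(2) M2_nonneg[of k a] by (simp add: algebra_simps)
    ultimately have "real n * (2 * \<bar>sin (real n * t)\<bar>) < real n * 1" by linarith
    then have "2 * \<bar>sin (real n * t)\<bar> < 1" using n0 mult_less_cancel_left_pos by blast
    then show ?thesis by simp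
  qed
  have c2: "\<bar>cos (real n * t)\<bar> < 1/2"
  proof -
    have "(real n)^2 * \<bar>cos (real n * t)\<bar> \<le> M2 k a" using c f2dd_bound[of k a t] n0 by (simp add: abs_mult)
    moreover have "M2 k a < real n / 2" proof - have "2 * M2 k a < real n" using assms(2) M1_nonneg[of k a] by (simp add: algebra_simps) then show ?thesis by simp qed
    moreover have "real n \<le> (real n)^2" using assms(2) M1_nonneg[of k a] M2_nonneg[of k a]
      by (simp add: power2_eq_square)
    ultimately have "(real n)^2 * \<bar>cos (real n * t)\<bar> < (real n)^2 / 2" by linarith
    then show ?thesis using n0 by (simp add: field_simps)
  qed
  have "(sin (real n * t))^2 + (cos (real n * t))^2 = 1" by simp
  moreover have "(sin (real n * t))^2 < 1/4"
  proof -
    have "\<bar>sin (real n * t)\<bar>^2 < (1/2)^2" using s2 by (intro power_strict_mono) auto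
    then show ?thesis by (simp add: power2_eq_square)
  qed
  moreover have "(cos (real n * t))^2 < 1/4"
  proof -
    have "\<bar>cos (real n * t)\<bar>^2 < (1/2)^2" using c2 by (intro power_strict_mono) auto
    then show ?thesis by (simp add: power2_eq_square)
  qed
  ultimately show False by linarith
qed

lemma order_le1:
  assumes "n > k" "0 < \<eta>" "\<eta> \<le> 1/2" "real n * \<eta> > M1 k a" "\<bar>f2 k a t\<bar> \<le> 1 - \<eta>"
  shows "order (cis t) (P2n k a n) \<le> 1"
proof (rule ccontr)
  assume A: "\<not> ?thesis"
  have n0: "real n > 0" using assms(1) by simp
  have root: "cos (real n * t) = f2 k a t"
  proof (rule ccontr)
    assume "cos (real n * t) \<noteq> f2 k a t"
    then have "poly (P2n k a n) (cis t) \<noteq> 0" using root_iff[OF assms(1)] by simp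
    then have "order (cis t) (P2n k a n) = 0" by (simp add: order_0I)
    with A show False by simp
  qed
  have s: "real n * sin (real n * t) = - f2d k a t" using order_ge2_deriv[OF assms(1) root] A by simp
  have s2: "\<bar>sin (real n * t)\<bar> < \<eta>"
  proof -
    have "real n * \<bar>sin (real n * t)\<bar> \<le> M1 k a" using s f2d_bound[of k a t] n0 by (simp add: abs_mult)
    then have "real n * \<bar>sin (real n * t)\<bar> < real n * \<eta>" using assms(4) by linarith
    then show ?thesis using n0 by simp
  qed
  have "(sin (real n * t))^2 + (cos (real n * t))^2 = 1" by simp
  moreover have "(sin (real n * t))^2 \<le> \<eta>^2" using s2 assms(2) abs_le_square_iff[of "sin (real n * t)" \<eta>] by simp
  moreover have "(cos (real n * t))^2 \<le> (1 - \<eta>)^2" using assms(5) root assms(3) abs_le_square_iff[of "cos (real n * t)" "1 - \<eta>"] by simp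
  ultimately have "1 \<le> \<eta>^2 + (1 - \<eta>)^2" by linarith
  moreover have "\<eta> * (1 - \<eta>) > 0" using assms(2,3) by simp
  ultimately show False by (simp add: power2_eq_square algebra_simps)
qed

lemma rolle_count:
  fixes g g' :: "real \<Rightarrow> real"
  assumes der: "\<And>t. t \<in> {\<alpha>..\<beta>} \<Longrightarrow> (g has_real_derivative g' t) (at t)"
    and bnd: "\<And>F. finite F \<Longrightarrow> F \<subseteq> {\<alpha>..\<beta>} \<Longrightarrow> (\<forall>t\<in>F. g' t = 0) \<Longrightarrow> card F \<le> N"
    and Z: "finite Z" "Z \<subseteq> {\<alpha>..\<beta>}" "\<forall>t\<in>Z. g t = 0"
  shows "card Z \<le> N + 1"
proof (cases "Z = {}")
  case True then show ?thesis by simp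
next
  case False
  define Z' where "Z' = Z - {Max Z}"
  define nxt where "nxt s = Min {u\<in>Z. u > s}" for s
  have nxt: "nxt s \<in> Z \<and> s < nxt s \<and> (\<forall>u\<in>Z. u > s \<longrightarrow> nxt s \<le> u)" if "s \<in> Z'" for s
  proof -
    have "s \<in> Z" "s \<noteq> Max Z" using that by (auto simp: Z'_def)
    then have "s < Max Z" using Z(1) by (simp add: order_less_le)
    then have ne: "{u\<in>Z. u > s} \<noteq> {}" using Max_in[OF Z(1) False] by blast
    have fin: "finite {u\<in>Z. u > s}" using Z(1) by simp
    show ?thesis unfolding nxt_def using Min_in[OF fin ne] Min_le[OF fin] by auto
  qed
  have "\<forall>s\<in>Z'. \<exists>r. s < r \<and> r < nxt s \<and> g' r = 0"
  proof
    fix s assume s: "s \<in> Z'"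
    have sZ: "s \<in> Z" using s by (simp add: Z'_def)
    from nxt[OF s] have n: "nxt s \<in> Z" "s < nxt s" by auto
    have sub: "{s..nxt s} \<subseteq> {\<alpha>..\<beta>}" using Z(2) sZ n(1) by auto
    have cont: "continuous_on {s..nxt s} g"
    proof (intro continuous_at_imp_continuous_on ballI)
      fix x assume "x \<in> {s..nxt s}"
      then have "(g has_real_derivative g' x) (at x)" using der sub by auto
      then show "isCont g x" by (rule DERIV_isCont)
    qed
    have "\<exists>z. s < z \<and> z < nxt s \<and> DERIV g z :> 0"
    proof (intro Rolle cont)
      show "g s = g (nxt s)" using Z(3) sZ n by auto
      fix x assume "s < x" "x < nxt s"
      then have "(g has_real_derivative g' x) (at x)" using der sub by auto
      then show "g differentiable (at x)" using real_differentiable_def by blast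
    qed (use n in auto)
    then obtain z where z: "s < z" "z < nxt s" "DERIV g z :> 0" by blast
    have "DERIV g z :> g' z" using der sub z by auto
    then have "g' z = 0" using DERIV_unique z(3) by blast
    then show "\<exists>r. s < r \<and> r < nxt s \<and> g' r = 0" using z by blast
  qed
  then obtain r where r: "\<And>s. s \<in> Z' \<Longrightarrow> s < r s \<and> r s < nxt s \<and> g' (r s) = 0" by metis
  have inj: "inj_on r Z'"
  proof (rule inj_onI)
    fix s1 s2 assume s: "s1 \<in> Z'" "s2 \<in> Z'" "r s1 = r s2"
    show "s1 = s2"
    proof (rule ccontr)
      assume "s1 \<noteq> s2"
      then consider "s1 < s2" | "s2 < s1" by linarith
      then show False
      proof cases
        case 1
        have "nxt s1 \<le> s2" using nxt[OF s(1)] s(2) 1 by (auto simp: Z'_def)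
        then show False using r[OF s(1)] r[OF s(2)] s(3) by linarith
      next
        case 2
        have "nxt s2 \<le> s1" using nxt[OF s(2)] s(1) 2 by (auto simp: Z'_def)
        then show False using r[OF s(1)] r[OF s(2)] s(3) by linarith
      qed
    qed
  qed
  have "card (r ` Z') \<le> N"
  proof (rule bnd)
    show "finite (r ` Z')" using Z(1) by (simp add: Z'_def)
    show "r ` Z' \<subseteq> {\<alpha>..\<beta>}"
    proof
      fix x assume "x \<in> r ` Z'"
      then obtain s where s: "s \<in> Z'" "x = r s" by blast
      have "s \<in> Z" "nxt s \<in> Z" using nxt[OF s(1)] s(1) by (auto simp: Z'_def)
      then show "x \<in> {\<alpha>..\<beta>}" using r[OF s(1)] s(2) Z(2) by force
    qed
    show "\<forall>t\<in>r ` Z'. g' t = 0" using r by auto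
  qed
  then have "card Z' \<le> N" using card_image[OF inj] by simp
  moreover have "card Z = card Z' + 1" using Max_in[OF Z(1) False] Z(1) unfolding Z'_def
    by (simp add: card_Suc_Diff1) (metis Suc_pred card_gt_0_iff empty_iff)
  ultimately show ?thesis by simp
qed


lemma f2_deriv: "(f2 k a has_real_derivative f2d k a t) (at t)"
  unfolding f2_def[abs_def] f2d_def
  by (auto intro!: derivative_eq_intros simp: algebra_simps sum_negf)

lemma f2d_deriv: "(f2d k a has_real_derivative f2dd k a t) (at t)"
  unfolding f2d_def[abs_def] f2dd_def
  by (auto intro!: derivative_eq_intros simp: algebra_simps power2_eq_square)

lemma g_deriv: "((\<lambda>t. cos (real n * t) - f2 k a t) has_real_derivative (- real n * sin (real n * t) - f2d k a t)) (at t)"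
  by (auto intro!: derivative_eq_intros f2_deriv)

lemma gd_deriv: "((\<lambda>t. - real n * sin (real n * t) - f2d k a t) has_real_derivative (- (real n * real n) * cos (real n * t) - f2dd k a t)) (at t)"
  by (auto intro!: derivative_eq_intros f2d_deriv)

lemma f2_cont: "continuous_on S (f2 k a)"
  unfolding f2_def[abs_def] by (intro continuous_intros)

lemma cos_shift_sq: "(cos (x + real_of_int m * pi))^2 = (cos x)^2"
proof -
  have "sin (real_of_int m * pi) = 0" using sin_npi_int[of m] by (simp add: mult.commute)
  moreover have "(cos (real_of_int m * pi))^2 = 1" using cos_npi_int[of m] by (simp add: mult.commute)
  ultimately show ?thesis by (simp add: cos_add power_mult_distrib)
qed

lemma cos_between:
  assumes "-(pi/2) \<le> x1" "x1 \<le> y" "y \<le> x2" "x2 \<le> pi/2"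
  shows "cos y \<ge> min (cos x1) (cos x2)"
proof (cases "y \<ge> 0")
  case True
  then have "cos x2 \<le> cos y" using assms by (intro cos_monotone_0_pi_le) auto
  then show ?thesis by simp
next
  case False
  then have "cos (-x1) \<le> cos (-y)" using assms by (intro cos_monotone_0_pi_le) auto
  then show ?thesis by simp
qed

lemma gd_zeros:
  assumes n: "real n \<ge> 2 * (M1 k a + M2 k a) + 1"
    and F: "finite F" "F \<subseteq> {\<alpha>..\<beta>}" "\<forall>t\<in>F. - real n * sin (real n * t) - f2d k a t = 0"
    and ab: "\<alpha> \<le> \<beta>"
  shows "real (card F) \<le> real n * (\<beta> - \<alpha>) / pi + 2"
proof -
  have M1: "M1 k a \<ge> 0" and M2: "M2 k a \<ge> 0" by (rule M1_nonneg M2_nonneg)+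
  have n': "real n \<ge> 2 * M1 k a + 2 * M2 k a + 1" using n by (simp add: algebra_simps)
  have n0: "real n > 0" using n' M1 M2 by linarith
  define m where "m s = \<lfloor>real n * s / pi + 1/2\<rfloor>" for s
  have mb: "real_of_int (m s) * pi - pi/2 \<le> real n * s \<and> real n * s < real_of_int (m s) * pi + pi/2" for s
  proof -
    have "real_of_int (m s) \<le> real n * s / pi + 1/2" "real n * s / pi + 1/2 < real_of_int (m s) + 1"
      unfolding m_def by linarith+
    then have "real_of_int (m s) * pi \<le> (real n * s / pi + 1/2) * pi" "(real n * s / pi + 1/2) * pi < (real_of_int (m s) + 1) * pi"
      by (auto intro: mult_right_mono)
    then show ?thesis by (simp add: algebra_simps)
  qed
  have cos_big: "(cos (real n * s))^2 > 3/4" if "s \<in> F" for s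
  proof -
    have "real n * sin (real n * s) = - f2d k a s" using F(3) that by force
    then have "real n * \<bar>sin (real n * s)\<bar> \<le> M1 k a" using f2d_bound[of k a s] n0 by (simp add: abs_mult)
    moreover have "2 * M1 k a < real n" using n' M2 by linarith
    ultimately have "real n * (2 * \<bar>sin (real n * s)\<bar>) < real n * 1" by linarith
    then have "2 * \<bar>sin (real n * s)\<bar> < 1" using n0 mult_less_cancel_left_pos by blast
    then have "\<bar>sin (real n * s)\<bar>^2 < (1/2)^2" by (intro power_strict_mono) auto
    then have "(sin (real n * s))^2 < 1/4" by (simp add: power2_eq_square)
    moreover have "(sin (real n * s))^2 + (cos (real n * s))^2 = 1" by simp
    ultimately show ?thesis by linarith
  qed
  have inj: "inj_on m F"
  proof (rule ccontr)
    assume "\<not> inj_on m F"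
    then obtain s1 s2 where s: "s1 \<in> F" "s2 \<in> F" "m s1 = m s2" "s1 < s2"
      unfolding inj_on_def by (metis linorder_neqE_linordered_idom)
    define gd where "gd = (\<lambda>t. - real n * sin (real n * t) - f2d k a t)"
    have gdd: "(gd has_real_derivative (- (real n * real n) * cos (real n * t) - f2dd k a t)) (at t)" for t
      unfolding gd_def by (rule gd_deriv)
    have "\<exists>z. s1 < z \<and> z < s2 \<and> DERIV gd z :> 0"
    proof (intro Rolle)
      show "gd s1 = gd s2" using F(3) s unfolding gd_def by simp
      show "continuous_on {s1..s2} gd"
        by (intro continuous_at_imp_continuous_on ballI DERIV_isCont[OF gdd])
      fix x show "gd differentiable (at x)" using gdd real_differentiable_def by blast
    qed (use s in auto)
    then obtain r where r: "s1 < r" "r < s2" "DERIV gd r :> 0" by blast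
    have "- (real n * real n) * cos (real n * r) - f2dd k a r = 0"
      using DERIV_unique[OF gdd r(3)] .
    then have "(real n)^2 * cos (real n * r) = - f2dd k a r" by (simp add: power2_eq_square)
    then have c: "(real n)^2 * \<bar>cos (real n * r)\<bar> \<le> M2 k a" using f2dd_bound[of k a r]
      by (metis abs_minus_cancel abs_mult abs_power2)
    define M where "M = real_of_int (m s1)"
    have x1: "-(pi/2) \<le> real n * s1 - M * pi" "real n * s1 - M * pi \<le> pi/2" using mb[of s1] unfolding M_def by auto
    have x2: "-(pi/2) \<le> real n * s2 - M * pi" "real n * s2 - M * pi \<le> pi/2" using mb[of s2] s(3) unfolding M_def by auto
    have y: "real n * s1 - M * pi \<le> real n * r - M * pi" "real n * r - M * pi \<le> real n * s2 - M * pi"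
      using r n0 by auto
    have cy: "cos (real n * r - M * pi) \<ge> min (cos (real n * s1 - M * pi)) (cos (real n * s2 - M * pi))"
      by (rule cos_between) (use x1 x2 y in auto)
    have sq: "(cos (u - M * pi))^2 = (cos u)^2" for u
      using cos_shift_sq[of "u - M * pi" "m s1"] unfolding M_def by simp
    have c1: "cos (real n * s1 - M * pi) \<ge> 0" "cos (real n * s2 - M * pi) \<ge> 0"
      using x1 x2 by (auto intro!: cos_ge_zero)
    have "(cos (real n * r - M * pi))^2 > 3/4"
    proof (cases "cos (real n * s1 - M * pi) \<le> cos (real n * s2 - M * pi)")
      case True
      then have "cos (real n * r - M * pi) \<ge> cos (real n * s1 - M * pi)" using cy by simp
      then have "(cos (real n * r - M * pi))^2 \<ge> (cos (real n * s1 - M * pi))^2" using c1 by (intro power_mono) auto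
      then show ?thesis using sq cos_big[OF s(1)] by simp
    next
      case False
      then have "cos (real n * r - M * pi) \<ge> cos (real n * s2 - M * pi)" using cy by simp
      then have "(cos (real n * r - M * pi))^2 \<ge> (cos (real n * s2 - M * pi))^2" using c1 by (intro power_mono) auto
      then show ?thesis using sq cos_big[OF s(2)] by simp
    qed
    then have cr: "(cos (real n * r))^2 > 3/4" using sq by simp
    have "((real n)^2 * \<bar>cos (real n * r)\<bar>)^2 \<le> (M2 k a)^2" using c by (intro power_mono) auto
    then have A: "(real n)^4 * (cos (real n * r))^2 \<le> (M2 k a)^2" by (simp add: power_mult_distrib power2_abs flip: power_mult)
    have "(real n)^4 * (3/4) < (real n)^4 * (cos (real n * r))^2" using cr n0 by simp
    moreover have "(M2 k a)^2 \<le> (real n)^4 * (3/4)"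
    proof -
      have "2 * M2 k a \<le> real n" using n' M1 by linarith
      then have "(2 * M2 k a)^2 \<le> (real n)^2" using M2 by (intro power_mono) auto
      then have "4 * (M2 k a)^2 \<le> (real n)^2" by (simp add: power_mult_distrib)
      moreover have "(real n)^2 \<le> (real n)^4"
      proof -
        have "1 \<le> real n" using n' M1 M2 by linarith
        then have "1 \<le> (real n)^2" by simp
        then have "(real n)^2 * 1 \<le> (real n)^2 * (real n)^2" by (intro mult_left_mono) auto
        then show ?thesis by (simp flip: power_add)
      qed
      moreover have "0 \<le> (real n)^4" by simp
      ultimately show ?thesis by linarith
    qed
    ultimately show False using A by linarith
  qed
  have sub: "m ` F \<subseteq> {m \<alpha>..m \<beta>}"
  proof
    fix x assume "x \<in> m ` F"
    then obtain s where s: "s \<in> F" "x = m s" by blast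
    then have "\<alpha> \<le> s" "s \<le> \<beta>" using F(2) by auto
    then have "real n * \<alpha> / pi + 1/2 \<le> real n * s / pi + 1/2" "real n * s / pi + 1/2 \<le> real n * \<beta> / pi + 1/2"
      using n0 by (auto intro!: divide_right_mono mult_left_mono)
    then show "x \<in> {m \<alpha>..m \<beta>}" unfolding s(2) m_def by (auto intro: floor_mono)
  qed
  have "card F = card (m ` F)" using card_image[OF inj] by simp
  also have "\<dots> \<le> card {m \<alpha>..m \<beta>}" by (rule card_mono[OF _ sub]) simp
  finally have "real (card F) \<le> real (card {m \<alpha>..m \<beta>})" by simp
  also have "\<dots> = real (nat (m \<beta> - m \<alpha> + 1))" by simp
  also have "\<dots> \<le> real n * (\<beta> - \<alpha>) / pi + 2"
  proof -
    have "real_of_int (m \<beta>) \<le> real n * \<beta> / pi + 1/2" "real n * \<alpha> / pi + 1/2 < real_of_int (m \<alpha>) + 1"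
      unfolding m_def by linarith+
    moreover have "m \<alpha> \<le> m \<beta>" unfolding m_def using ab n0 by (auto intro!: floor_mono divide_right_mono mult_left_mono)
    ultimately show ?thesis by (simp add: diff_divide_distrib right_diff_distrib)
  qed
  finally show ?thesis .
qed


lemma g_zeros_upper:
  assumes n: "real n \<ge> 2 * (M1 k a + M2 k a) + 1" and ab: "\<alpha> \<le> \<beta>"
    and Z: "finite Z" "Z \<subseteq> {\<alpha>..\<beta>}" "\<forall>t\<in>Z. cos (real n * t) = f2 k a t"
  shows "real (card Z) \<le> real n * (\<beta> - \<alpha>) / pi + 3"
proof -
  define N where "N = nat \<lfloor>real n * (\<beta> - \<alpha>) / pi + 2\<rfloor>"
  have "card Z \<le> N + 1"
  proof (rule rolle_count[where g="\<lambda>t. cos (real n * t) - f2 k a t" and g'="\<lambda>t. - real n * sin (real n * t) - f2d k a t"])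
    show "\<And>t. ((\<lambda>t. cos (real n * t) - f2 k a t) has_real_derivative - real n * sin (real n * t) - f2d k a t) (at t)"
      by (rule g_deriv)
    fix F assume F: "finite F" "F \<subseteq> {\<alpha>..\<beta>}" "\<forall>t\<in>F. - real n * sin (real n * t) - f2d k a t = 0"
    have "real (card F) \<le> real n * (\<beta> - \<alpha>) / pi + 2" by (rule gd_zeros[OF n F ab])
    then have "int (card F) \<le> \<lfloor>real n * (\<beta> - \<alpha>) / pi + 2\<rfloor>" by (simp only: le_floor_iff)
    then show "card F \<le> N" unfolding N_def by (metis nat_int nat_mono)
  qed (use Z in auto)
  moreover have "real N \<le> real n * (\<beta> - \<alpha>) / pi + 2"
  proof -
    have "0 \<le> real n * (\<beta> - \<alpha>) / pi + 2" using ab by simp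
    then show ?thesis unfolding N_def by linarith
  qed
  ultimately show ?thesis by linarith
qed

lemma g_zeros_lower:
  assumes n: "n > 0" and ab: "\<alpha> \<le> \<beta>" and f: "\<forall>t\<in>{\<alpha>..\<beta>}. \<bar>f2 k a t\<bar> < 1"
    and Z: "finite Z" "{t\<in>{\<alpha>..<\<beta>}. cos (real n * t) = f2 k a t} \<subseteq> Z"
  shows "real (card Z) \<ge> real n * (\<beta> - \<alpha>) / pi - 2"
proof -
  have n0: "real n > 0" using n by simp
  define lo where "lo = \<lceil>real n * \<alpha> / pi\<rceil>"
  define hi where "hi = \<lfloor>real n * \<beta> / pi\<rfloor>"
  define g where "g = (\<lambda>t. cos (real n * t) - f2 k a t)"
  have gc: "continuous_on S g" for S unfolding g_def by (intro continuous_intros f2_cont)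
  have ex: "\<exists>r. real_of_int m * pi / real n < r \<and> r < real_of_int (m+1) * pi / real n \<and> g r = 0"
    if m: "m \<in> {lo..<hi}" for m
  proof -
    define A where "A = real_of_int m * pi / real n"
    define B where "B = real_of_int (m+1) * pi / real n"
    have AB: "A < B" unfolding A_def B_def using n0 by (simp add: divide_strict_right_mono)
    have "real n * \<alpha> / pi \<le> real_of_int m" using m unfolding lo_def by (simp add: ceiling_le_iff)
    then have "\<alpha> \<le> A" unfolding A_def using n0 by (simp add: field_simps)
    have "m + 1 \<le> hi" using m by simp
    then have "real_of_int (m+1) \<le> real n * \<beta> / pi" unfolding hi_def by (simp only: le_floor_iff)
    then have "B \<le> \<beta>" unfolding B_def using n0 by (simp add: field_simps)
    have fA: "\<bar>f2 k a A\<bar> < 1" using f \<open>\<alpha> \<le> A\<close> \<open>B \<le> \<beta>\<close> AB by auto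
    have fB: "\<bar>f2 k a B\<bar> < 1" using f \<open>\<alpha> \<le> A\<close> \<open>B \<le> \<beta>\<close> AB by auto
    have cA: "cos (real n * A) = (if even m then 1 else -1)"
      unfolding A_def using n0 cos_npi_int[of m] by (simp add: mult.commute)
    have cB: "cos (real n * B) = (if even m then -1 else 1)"
      unfolding B_def using n0 cos_npi_int[of "m+1"] by (simp add: mult.commute)
    have "\<exists>r. A \<le> r \<and> r \<le> B \<and> g r = 0"
    proof (cases "even m")
      case True
      then have "g B \<le> 0" "0 \<le> g A" using cA cB fA fB unfolding g_def by auto
      then show ?thesis using IVT2'[of g B 0 A, OF _ _ less_imp_le[OF AB] gc] by auto
    next
      case False
      then have "g A \<le> 0" "0 \<le> g B" using cA cB fA fB unfolding g_def by auto
      then show ?thesis using IVT'[of g A 0 B, OF _ _ less_imp_le[OF AB] gc] by auto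
    qed
    then obtain r where r: "A \<le> r" "r \<le> B" "g r = 0" by blast
    have "g A \<noteq> 0" "g B \<noteq> 0" using cA cB fA fB unfolding g_def by auto
    then have "r \<noteq> A" "r \<noteq> B" using r by auto
    then have "A < r" "r < B" using r by auto
    then show ?thesis using r(3) unfolding A_def B_def by blast
  qed
  then obtain r where r: "\<And>m. m \<in> {lo..<hi} \<Longrightarrow> real_of_int m * pi / real n < r m \<and> r m < real_of_int (m+1) * pi / real n \<and> g (r m) = 0"
    by metis
  have inj: "inj_on r {lo..<hi}"
  proof (rule inj_onI, rule ccontr)
    fix m1 m2 assume m: "m1 \<in> {lo..<hi}" "m2 \<in> {lo..<hi}" "r m1 = r m2" "m1 \<noteq> m2"
    have mono: "r x < r y" if "x \<in> {lo..<hi}" "y \<in> {lo..<hi}" "x < y" for x y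
    proof -
      have "real_of_int (x+1) \<le> real_of_int y" using that by simp
      then have "real_of_int (x+1) * pi / real n \<le> real_of_int y * pi / real n" using n0
        by (intro divide_right_mono mult_right_mono) auto
      then show ?thesis using r[OF that(1)] r[OF that(2)] by linarith
    qed
    show False using m mono[of m1 m2] mono[of m2 m1] by (cases "m1 < m2") auto
  qed
  have sub: "r ` {lo..<hi} \<subseteq> Z"
  proof
    fix x assume "x \<in> r ` {lo..<hi}"
    then obtain m where m: "m \<in> {lo..<hi}" "x = r m" by blast
    have "real n * \<alpha> / pi \<le> real_of_int m" using m unfolding lo_def by (simp add: ceiling_le_iff)
    then have "\<alpha> \<le> real_of_int m * pi / real n" using n0 by (simp add: field_simps)
    moreover have "m + 1 \<le> hi" using m by simp
    then have "real_of_int (m+1) \<le> real n * \<beta> / pi" unfolding hi_def by (simp only: le_floor_iff)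
    then have "real_of_int (m+1) * pi / real n \<le> \<beta>" using n0 by (simp add: field_simps)
    ultimately have "x \<in> {\<alpha>..<\<beta>}" "g x = 0" using r[OF m(1)] m(2) by auto
    then show "x \<in> Z" using Z(2) unfolding g_def by auto
  qed
  have "card {lo..<hi} \<le> card Z" using card_inj_on_le[OF inj sub Z(1)] .
  then have "real (nat (hi - lo)) \<le> real (card Z)" by simp
  moreover have "real n * (\<beta> - \<alpha>) / pi - 2 \<le> real (nat (hi - lo))"
  proof -
    have "real n * \<beta> / pi - 1 < real_of_int hi" "real_of_int lo < real n * \<alpha> / pi + 1"
      unfolding hi_def lo_def by linarith+
    then have "real n * (\<beta> - \<alpha>) / pi - 2 \<le> real_of_int (hi - lo)"
      by (simp add: diff_divide_distrib right_diff_distrib)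
    then show ?thesis by linarith
  qed
  ultimately show ?thesis by linarith
qed

definition Qc :: "nat \<Rightarrow> (nat \<Rightarrow> int) \<Rightarrow> real \<Rightarrow> complex poly" where
  "Qc k a c = monom (complex_of_real (2*c) + of_int (a 0)) k
     + (\<Sum>j\<in>{1..k}. monom (of_int (a j)) (k + j) + monom (of_int (a j)) (k - j))"

lemma poly_Qc_cis:
  "poly (Qc k a c) (cis t) = 2 * cis (real k * t) * complex_of_real (c - f2 k a t)"
proof -
  have tm: "of_int (a j) * cis t ^ (k + j) + of_int (a j) * cis t ^ (k - j)
      = cis (real k * t) * complex_of_real (2 * of_int (a j) * cos (real j * t))" if "j \<in> {1..k}" for j
  proof -
    have jn: "j \<le> k" using that by auto
    have "cis t ^ (k + j) = cis (real k * t) * cis (real j * t)"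
      unfolding Complex.DeMoivre cis_mult by (simp add: algebra_simps)
    moreover have "cis t ^ (k - j) = cis (real k * t) * cis (- (real j * t))"
      using jn unfolding Complex.DeMoivre cis_mult by (simp add: of_nat_diff algebra_simps)
    ultimately have "of_int (a j) * cis t ^ (k + j) + of_int (a j) * cis t ^ (k - j)
       = cis (real k * t) * (of_int (a j) * (cis (real j * t) + cis (- (real j * t))))"
      by (simp add: algebra_simps)
    also have "\<dots> = cis (real k * t) * complex_of_real (2 * of_int (a j) * cos (real j * t))"
      by (subst cis_pm) simp
    finally show ?thesis .
  qed
  have "poly (Qc k a c) (cis t) = (complex_of_real (2*c) + of_int (a 0)) * cis (real k * t)
      + (\<Sum>j\<in>{1..k}. of_int (a j) * cis t ^ (k + j) + of_int (a j) * cis t ^ (k - j))"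
    by (simp add: Qc_def poly_sum poly_monom Complex.DeMoivre)
  also have "\<dots> = (complex_of_real (2*c) + of_int (a 0)) * cis (real k * t)
      + (\<Sum>j\<in>{1..k}. cis (real k * t) * complex_of_real (2 * of_int (a j) * cos (real j * t)))"
    by (simp only: sum.cong[OF refl tm])
  also have "\<dots> = 2 * cis (real k * t) * complex_of_real (c - f2 k a t)"
    by (simp add: f2_def sum_distrib_left algebra_simps)
  finally show ?thesis .
qed

lemma Qc_nonzero: assumes "j0 \<in> {1..k}" "a j0 \<noteq> 0" shows "Qc k a c \<noteq> 0"
proof -
  have "coeff (Qc k a c) (k + j0) = of_int (a j0)"
  proof -
    have "(\<Sum>j\<in>{1..k}. coeff (monom (of_int (a j)) (k + j)) (k + j0) + coeff (monom (of_int (a j)) (k - j)) (k + j0))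
       = (\<Sum>j\<in>{1..k}. if j = j0 then (of_int (a j0)::complex) else 0)"
      using assms(1) by (intro sum.cong refl) (auto simp: coeff_monom)
    also have "\<dots> = of_int (a j0)" using assms(1) by simp
    finally show ?thesis using assms(1) by (simp add: Qc_def coeff_sum coeff_monom)
  qed
  then show ?thesis using assms(2) by auto
qed

lemma finite_level:
  assumes "\<exists>j\<in>{1..k}. a j \<noteq> 0"
  shows "finite {t. 0 \<le> t \<and> t < 2*pi \<and> f2 k a t = c}"
proof -
  obtain j0 where j0: "j0 \<in> {1..k}" "a j0 \<noteq> 0" using assms by blast
  have "cis ` {t. 0 \<le> t \<and> t < 2*pi \<and> f2 k a t = c} \<subseteq> {z. poly (Qc k a c) z = 0}"
    using poly_Qc_cis by auto
  then have "finite (cis ` {t. 0 \<le> t \<and> t < 2*pi \<and> f2 k a t = c})"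
    using poly_roots_finite[OF Qc_nonzero[of j0 k a c, OF j0]] finite_subset by blast
  moreover have "inj_on cis {t. 0 \<le> t \<and> t < 2*pi \<and> f2 k a t = c}"
    by (rule inj_on_subset[OF cis_inj]) auto
  ultimately show ?thesis using finite_imageD by blast
qed

definition Lset :: "nat \<Rightarrow> (nat \<Rightarrow> int) \<Rightarrow> real set" where
  "Lset k a = {t. 0 \<le> t \<and> t \<le> 2*pi \<and> \<bar>f2 k a t\<bar> = 1}"

lemma finite_Lset:
  assumes "\<exists>j\<in>{1..k}. a j \<noteq> 0"
  shows "finite (Lset k a)"
proof -
  have "Lset k a \<subseteq> {t. 0 \<le> t \<and> t < 2*pi \<and> f2 k a t = 1} \<union> {t. 0 \<le> t \<and> t < 2*pi \<and> f2 k a t = -1} \<union> {2*pi}"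
  proof
    fix t assume "t \<in> Lset k a"
    then have t: "0 \<le> t" "t \<le> 2*pi" "f2 k a t = 1 \<or> f2 k a t = -1" unfolding Lset_def by (auto simp: abs_eq_iff)
    show "t \<in> {t. 0 \<le> t \<and> t < 2*pi \<and> f2 k a t = 1} \<union> {t. 0 \<le> t \<and> t < 2*pi \<and> f2 k a t = -1} \<union> {2*pi}"
      using t by (cases "t = 2*pi") auto
  qed
  moreover have "finite ({t. 0 \<le> t \<and> t < 2*pi \<and> f2 k a t = 1} \<union> {t. 0 \<le> t \<and> t < 2*pi \<and> f2 k a t = -1} \<union> {2*pi})"
    using finite_level[OF assms, of 1] finite_level[OF assms, of "-1"] by simp
  ultimately show ?thesis using finite_subset by blast
qed

definition Tab :: "nat \<Rightarrow> (nat \<Rightarrow> int) \<Rightarrow> nat \<Rightarrow> real \<Rightarrow> real \<Rightarrow> real set" where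
  "Tab k a n \<alpha> \<beta> = {t\<in>Tset k a n. \<alpha> \<le> t \<and> t < \<beta>}"

definition Ucnt :: "nat \<Rightarrow> (nat \<Rightarrow> int) \<Rightarrow> nat \<Rightarrow> real set \<Rightarrow> nat" where
  "Ucnt k a n A = (\<Sum>t\<in>A. order (cis t) (P2n k a n))"

lemma Tab_finite: "n > k \<Longrightarrow> finite (Tab k a n \<alpha> \<beta>)"
  using finite_Tset[of k n a] unfolding Tab_def by simp

lemma ord_ge1: assumes "n > k" "t \<in> Tset k a n" shows "order (cis t) (P2n k a n) \<ge> 1"
proof -
  have "poly (P2n k a n) (cis t) = 0" using assms root_iff[OF assms(1)] unfolding Tset_def by auto
  then show ?thesis using P_nonzero[OF assms(1)] order_root by (metis less_one not_le)
qed

lemma Ucnt_ge_card: assumes "n > k" "A \<subseteq> Tset k a n" "finite A" shows "card A \<le> Ucnt k a n A"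
proof -
  have "card A = (\<Sum>t\<in>A. 1)" by simp
  also have "\<dots> \<le> Ucnt k a n A" unfolding Ucnt_def using ord_ge1[OF assms(1)] assms(2)
    by (intro sum_mono) auto
  finally show ?thesis .
qed

lemma Ucnt_le_2card: assumes "n > k" "real n \<ge> 2 * (M1 k a + M2 k a) + 1" shows "Ucnt k a n A \<le> 2 * card A"
proof -
  have "Ucnt k a n A \<le> (\<Sum>t\<in>A. 2)" unfolding Ucnt_def using order_le2[OF assms] by (intro sum_mono) auto
  then show ?thesis by simp
qed

lemma Ucnt_le_card: assumes "n > k" "0 < \<eta>" "\<eta> \<le> 1/2" "real n * \<eta> > M1 k a" "\<forall>t\<in>A. \<bar>f2 k a t\<bar> \<le> 1 - \<eta>"
  shows "Ucnt k a n A \<le> card A"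
proof -
  have "Ucnt k a n A \<le> (\<Sum>t\<in>A. 1)" unfolding Ucnt_def using order_le1[OF assms(1-4)] assms(5) by (intro sum_mono) auto
  then show ?thesis by simp
qed

lemma piece_upper:
  assumes "n > k" "real n \<ge> 2 * (M1 k a + M2 k a) + 1" "\<alpha> \<le> \<beta>"
  shows "real (Ucnt k a n (Tab k a n \<alpha> \<beta>)) \<le> 2 * (real n * (\<beta> - \<alpha>) / pi + 3)"
proof -
  have "real (card (Tab k a n \<alpha> \<beta>)) \<le> real n * (\<beta> - \<alpha>) / pi + 3"
    by (rule g_zeros_upper[OF assms(2,3) Tab_finite[OF assms(1)]]) (auto simp: Tab_def Tset_def)
  moreover have "Ucnt k a n (Tab k a n \<alpha> \<beta>) \<le> 2 * card (Tab k a n \<alpha> \<beta>)" by (rule Ucnt_le_2card[OF assms(1,2)])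
  then have "real (Ucnt k a n (Tab k a n \<alpha> \<beta>)) \<le> 2 * real (card (Tab k a n \<alpha> \<beta>))" by (metis of_nat_le_iff of_nat_mult of_nat_numeral)
  ultimately show ?thesis by (simp only: distrib_left)
qed

lemma piece_upper_good:
  assumes "n > k" "real n \<ge> 2 * (M1 k a + M2 k a) + 1" "\<alpha> \<le> \<beta>"
    "0 < \<eta>" "\<eta> \<le> 1/2" "real n * \<eta> > M1 k a" "\<forall>t\<in>{\<alpha>..\<beta>}. \<bar>f2 k a t\<bar> \<le> 1 - \<eta>"
  shows "real (Ucnt k a n (Tab k a n \<alpha> \<beta>)) \<le> real n * (\<beta> - \<alpha>) / pi + 3"
proof -
  have "real (card (Tab k a n \<alpha> \<beta>)) \<le> real n * (\<beta> - \<alpha>) / pi + 3"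
    by (rule g_zeros_upper[OF assms(2,3) Tab_finite[OF assms(1)]]) (auto simp: Tab_def Tset_def)
  moreover have "Ucnt k a n (Tab k a n \<alpha> \<beta>) \<le> card (Tab k a n \<alpha> \<beta>)"
    by (rule Ucnt_le_card[OF assms(1,4,5,6)]) (use assms(7) in \<open>auto simp: Tab_def\<close>)
  ultimately show ?thesis by linarith
qed

lemma piece_lower_good:
  assumes "n > k" "0 \<le> \<alpha>" "\<alpha> \<le> \<beta>" "\<beta> \<le> 2*pi" "\<forall>t\<in>{\<alpha>..\<beta>}. \<bar>f2 k a t\<bar> < 1"
  shows "real (Ucnt k a n (Tab k a n \<alpha> \<beta>)) \<ge> real n * (\<beta> - \<alpha>) / pi - 2"
proof -
  have "real (card (Tab k a n \<alpha> \<beta>)) \<ge> real n * (\<beta> - \<alpha>) / pi - 2"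
    by (rule g_zeros_lower[OF _ assms(3,5) Tab_finite[OF assms(1)]]) (use assms in \<open>auto simp: Tab_def Tset_def\<close>)
  moreover have "card (Tab k a n \<alpha> \<beta>) \<le> Ucnt k a n (Tab k a n \<alpha> \<beta>)"
    by (rule Ucnt_ge_card[OF assms(1) _ Tab_finite[OF assms(1)]]) (auto simp: Tab_def)
  ultimately show ?thesis by linarith
qed

lemma piece_bad:
  assumes "\<forall>t\<in>{\<alpha>..\<beta>}. \<bar>f2 k a t\<bar> > 1"
  shows "Tab k a n \<alpha> \<beta> = {}"
proof -
  have "\<bar>cos (real n * t)\<bar> \<le> 1" for t by simp
  show ?thesis
  proof (rule ccontr)
    assume "Tab k a n \<alpha> \<beta> \<noteq> {}"
    then obtain t where t: "\<alpha> \<le> t" "t < \<beta>" "cos (real n * t) = f2 k a t" unfolding Tab_def Tset_def by auto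
    then have "\<bar>f2 k a t\<bar> > 1" using assms by auto
    then show False using t(3) \<open>\<And>t. \<bar>cos (real n * t)\<bar> \<le> 1\<close>[of t] by simp
  qed
qed

definition Xp :: "nat \<Rightarrow> nat \<Rightarrow> real" where "Xp N i = real i * (2*pi / real N)"

lemma Xp_Suc: "Xp N (Suc i) - Xp N i = 2*pi / real N"
  unfolding Xp_def by (simp add: algebra_simps add_divide_distrib)

lemma Xp_mono: "i \<le> j \<Longrightarrow> Xp N i \<le> Xp N j"
  unfolding Xp_def by (intro mult_right_mono) auto

lemma Xp_N: "N \<ge> 1 \<Longrightarrow> Xp N N = 2*pi" unfolding Xp_def by simp

lemma piece_index:
  assumes N: "N \<ge> 1" and t: "0 \<le> t" "t < 2*pi"
  defines "i \<equiv> nat \<lfloor>t / (2*pi / real N)\<rfloor>"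
  shows "i < N" "Xp N i \<le> t" "t < Xp N (Suc i)"
proof -
  define h where "h = 2*pi / real N"
  have h: "h > 0" unfolding h_def using N by simp
  have q0: "0 \<le> t / h" using t h by simp
  have "t / h < real N" using t h N unfolding h_def by (simp add: field_simps)
  then show "i < N" unfolding i_def h_def[symmetric] using q0 by (simp add: nat_less_iff floor_less_iff)
  have ri: "real i = of_int \<lfloor>t / h\<rfloor>" unfolding i_def h_def[symmetric] using q0 by simp
  have "real i \<le> t / h" "t / h < real i + 1" unfolding ri by linarith+
  then have "real i * h \<le> t" "t < (real i + 1) * h" using h by (simp_all add: field_simps)
  then show "Xp N i \<le> t" "t < Xp N (Suc i)" unfolding Xp_def h_def by (simp_all add: algebra_simps)
qed

lemma piece_unique:
  assumes N: "N \<ge> 1" and "Xp N i \<le> t" "t < Xp N (Suc i)"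
  shows "i = nat \<lfloor>t / (2*pi / real N)\<rfloor>"
proof -
  define h where "h = 2*pi / real N"
  have h: "h > 0" unfolding h_def using N by simp
  have "real i * h \<le> t" "t < (real i + 1) * h" using assms unfolding Xp_def h_def by (simp_all add: algebra_simps)
  then have "real i \<le> t / h" "t / h < real i + 1" using h by (simp_all add: field_simps)
  then have "\<lfloor>t / h\<rfloor> = int i" by (simp add: floor_eq_iff)
  then show ?thesis unfolding h_def by simp
qed

lemma sum_pieces:
  assumes "n > k" "N \<ge> 1"
  shows "zeros_on (P2n k a n) = (\<Sum>i<N. Ucnt k a n (Tab k a n (Xp N i) (Xp N (Suc i))))"
proof -
  define idx where "idx t = nat \<lfloor>t / (2*pi / real N)\<rfloor>" for t
  have T: "t \<in> Tset k a n \<Longrightarrow> 0 \<le> t \<and> t < 2*pi" for t unfolding Tset_def by auto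
  have "zeros_on (P2n k a n) = (\<Sum>t\<in>Tset k a n. order (cis t) (P2n k a n))" by (rule zeros_on_sum[OF assms(1)])
  also have "\<dots> = (\<Sum>i\<in>{..<N}. \<Sum>t\<in>{t\<in>Tset k a n. idx t = i}. order (cis t) (P2n k a n))"
  proof (rule sum.group[symmetric])
    show "finite (Tset k a n)" by (rule finite_Tset[OF assms(1)])
    show "finite {..<N}" by simp
    show "idx ` Tset k a n \<subseteq> {..<N}" using piece_index(1)[OF assms(2)] T unfolding idx_def by auto
  qed
  also have "\<dots> = (\<Sum>i<N. Ucnt k a n (Tab k a n (Xp N i) (Xp N (Suc i))))"
  proof (rule sum.cong[OF refl])
    fix i assume i: "i \<in> {..<N}"
    have "{t\<in>Tset k a n. idx t = i} = Tab k a n (Xp N i) (Xp N (Suc i))"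
    proof
      show "{t \<in> Tset k a n. idx t = i} \<subseteq> Tab k a n (Xp N i) (Xp N (Suc i))"
        using piece_index(2,3)[OF assms(2)] T unfolding Tab_def idx_def by blast
      show "Tab k a n (Xp N i) (Xp N (Suc i)) \<subseteq> {t \<in> Tset k a n. idx t = i}"
        using piece_unique[OF assms(2)] unfolding Tab_def idx_def by auto
    qed
    then show "(\<Sum>t\<in>{t\<in>Tset k a n. idx t = i}. order (cis t) (P2n k a n)) = Ucnt k a n (Tab k a n (Xp N i) (Xp N (Suc i)))"
      unfolding Ucnt_def by simp
  qed
  finally show ?thesis .
qed


definition goodp :: "nat \<Rightarrow> (nat \<Rightarrow> int) \<Rightarrow> nat \<Rightarrow> nat \<Rightarrow> bool" where
  "goodp k a N i = (\<forall>t\<in>{Xp N i..Xp N (Suc i)}. \<bar>f2 k a t\<bar> < 1)"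
definition badp :: "nat \<Rightarrow> (nat \<Rightarrow> int) \<Rightarrow> nat \<Rightarrow> nat \<Rightarrow> bool" where
  "badp k a N i = (\<forall>t\<in>{Xp N i..Xp N (Suc i)}. \<bar>f2 k a t\<bar> > 1)"
definition Gs where "Gs k a N = {i. i < N \<and> goodp k a N i}"
definition Ms where "Ms k a N = {i. i < N \<and> \<not> goodp k a N i \<and> \<not> badp k a N i}"

lemma mixed_point:
  assumes "i \<in> Ms k a N"
  shows "\<exists>u\<in>{Xp N i..Xp N (Suc i)}. \<bar>f2 k a u\<bar> = 1"
proof -
  obtain t where t: "t \<in> {Xp N i..Xp N (Suc i)}" "\<bar>f2 k a t\<bar> \<ge> 1"
    using assms unfolding Ms_def goodp_def by force
  obtain s where s: "s \<in> {Xp N i..Xp N (Suc i)}" "\<bar>f2 k a s\<bar> \<le> 1"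
    using assms unfolding Ms_def badp_def by force
  have cont: "continuous_on S (\<lambda>x. \<bar>f2 k a x\<bar>)" for S by (intro continuous_intros f2_cont)
  show ?thesis
  proof (cases "s \<le> t")
    case True
    then obtain u where "s \<le> u" "u \<le> t" "\<bar>f2 k a u\<bar> = 1"
      using IVT'[of "\<lambda>x. \<bar>f2 k a x\<bar>" s 1 t, OF s(2) t(2) True cont] by blast
    then show ?thesis using s t by auto
  next
    case False
    then obtain u where "t \<le> u" "u \<le> s" "\<bar>f2 k a u\<bar> = 1"
      using IVT2'[of "\<lambda>x. \<bar>f2 k a x\<bar>" s 1 t, OF s(2) t(2) _ cont] by force
    then show ?thesis using s t by auto
  qed
qed

lemma mixed_count:
  assumes "N \<ge> 1" "finite (Lset k a)"
  shows "card (Ms k a N) \<le> 2 * card (Lset k a)"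
proof -
  define h where "h = 2*pi / real N"
  have h: "h > 0" unfolding h_def using assms by simp
  define A where "A u = {nat \<lfloor>u / h\<rfloor> - 1, nat \<lfloor>u / h\<rfloor>}" for u
  have "Ms k a N \<subseteq> (\<Union>u\<in>Lset k a. A u)"
  proof
    fix i assume i: "i \<in> Ms k a N"
    obtain u where u: "u \<in> {Xp N i..Xp N (Suc i)}" "\<bar>f2 k a u\<bar> = 1" using mixed_point[OF i] by blast
    have iN: "i < N" using i unfolding Ms_def by simp
    have u0: "0 \<le> u" using u(1) unfolding Xp_def by (smt (verit) atLeastAtMost_iff h h_def mult_nonneg_nonneg of_nat_0_le_iff)
    have "u \<le> 2*pi" using u(1) Xp_mono[of "Suc i" N N] iN Xp_N[OF assms(1)] by auto
    then have uL: "u \<in> Lset k a" using u0 u(2) unfolding Lset_def by simp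
    have "real i * h \<le> u" "u \<le> (real i + 1) * h" using u(1) unfolding Xp_def h_def by (auto simp: algebra_simps)
    then have "real i \<le> u / h" "u / h \<le> real i + 1" using h by (simp_all add: field_simps)
    then have "int i \<le> \<lfloor>u / h\<rfloor>" "\<lfloor>u / h\<rfloor> \<le> int i + 1" by (simp_all add: le_floor_iff floor_le_iff)
    then have "i \<in> A u" unfolding A_def by auto
    then show "i \<in> (\<Union>u\<in>Lset k a. A u)" using uL by blast
  qed
  then have "card (Ms k a N) \<le> card (\<Union>u\<in>Lset k a. A u)"
    by (intro card_mono) (auto simp: A_def assms(2))
  also have "\<dots> \<le> (\<Sum>u\<in>Lset k a. card (A u))" by (rule card_UN_le[OF assms(2)])
  also have "\<dots> \<le> (\<Sum>u\<in>Lset k a. 2)" by (intro sum_mono) (auto simp: A_def card_insert_le_m1)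
  finally show ?thesis by simp
qed

lemma eta_exists:
  "\<exists>\<eta>. 0 < \<eta> \<and> \<eta> \<le> 1/2 \<and> (\<forall>i\<in>Gs k a N. \<forall>t\<in>{Xp N i..Xp N (Suc i)}. \<bar>f2 k a t\<bar> \<le> 1 - \<eta>)"
proof -
  define C where "C = (\<Union>i\<in>Gs k a N. {Xp N i..Xp N (Suc i)})"
  have fin: "finite (Gs k a N)" unfolding Gs_def by simp
  show ?thesis
  proof (cases "C = {}")
    case True
    then show ?thesis unfolding C_def by (intro exI[of _ "1/2"]) auto
  next
    case False
    have "compact C" unfolding C_def using fin by (intro compact_UN) auto
    moreover have "continuous_on C (\<lambda>x. \<bar>f2 k a x\<bar>)" by (intro continuous_intros f2_cont)
    ultimately obtain s where s: "s \<in> C" "\<forall>y\<in>C. \<bar>f2 k a y\<bar> \<le> \<bar>f2 k a s\<bar>"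
      using continuous_attains_sup[OF _ False] by blast
    have "\<bar>f2 k a s\<bar> < 1" using s(1) unfolding C_def Gs_def goodp_def by auto
    moreover have "\<forall>i\<in>Gs k a N. \<forall>t\<in>{Xp N i..Xp N (Suc i)}. \<bar>f2 k a t\<bar> \<le> \<bar>f2 k a s\<bar>"
      using s(2) unfolding C_def by blast
    ultimately show ?thesis
    proof (intro exI[of _ "min (1/2) (1 - \<bar>f2 k a s\<bar>)"] conjI ballI)
      assume "\<bar>f2 k a s\<bar> < 1" then show "0 < min (1/2) (1 - \<bar>f2 k a s\<bar>)" by simp
    next
      fix i t assume A: "\<forall>i\<in>Gs k a N. \<forall>t\<in>{Xp N i..Xp N (Suc i)}. \<bar>f2 k a t\<bar> \<le> \<bar>f2 k a s\<bar>"
        "i \<in> Gs k a N" "t \<in> {Xp N i..Xp N (Suc i)}"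
      then have "\<bar>f2 k a t\<bar> \<le> \<bar>f2 k a s\<bar>" by blast
      moreover have "min (1/2) (1 - \<bar>f2 k a s\<bar>) \<le> 1 - \<bar>f2 k a s\<bar>" by simp
      ultimately show "\<bar>f2 k a t\<bar> \<le> 1 - min (1/2) (1 - \<bar>f2 k a s\<bar>)" by linarith
    qed (simp add: min_def)
  qed
qed


definition Kset :: "nat \<Rightarrow> (nat \<Rightarrow> int) \<Rightarrow> real set" where
  "Kset k a = {t \<in> {0..2*pi}. \<bar>f2 k a t\<bar> < 1}"

lemma Kset_borel: "Kset k a \<in> sets lborel"
proof -
  have "open {t. \<bar>f2 k a t\<bar> < 1}"
    by (intro open_Collect_less continuous_intros f2_cont)
  then have "{t. \<bar>f2 k a t\<bar> < 1} \<in> sets lborel" by simp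
  moreover have "{0..2*pi} \<in> sets lborel" by simp
  ultimately have "{0..2*pi} \<inter> {t. \<bar>f2 k a t\<bar> < 1} \<in> sets lborel" using sets.Int by blast
  moreover have "{0..2*pi} \<inter> {t. \<bar>f2 k a t\<bar> < 1} = Kset k a" unfolding Kset_def by auto
  ultimately show ?thesis by simp
qed

lemma Icc_fmeas: "{x..y::real} \<in> fmeasurable lborel"
  using fmeasurable_cbox[of x y] by simp

lemma measure_upper:
  assumes N: "N \<ge> 1"
  shows "measure lborel (Kset k a) \<le> (real (card (Gs k a N)) + real (card (Ms k a N))) * (2*pi / real N)"
proof -
  define I where "I i = {Xp N i..Xp N (Suc i)}" for i
  define S where "S = Gs k a N \<union> Ms k a N"
  have finS: "finite S" unfolding S_def Gs_def Ms_def by simp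
  have sub: "Kset k a \<subseteq> (\<Union>i\<in>S. I i)"
  proof
    fix t assume t: "t \<in> Kset k a"
    then have t0: "0 \<le> t" "t \<le> 2*pi" "\<bar>f2 k a t\<bar> < 1" unfolding Kset_def by auto
    obtain i where i: "i < N" "t \<in> I i"
    proof (cases "t < 2*pi")
      case True
      show ?thesis using piece_index[OF N t0(1) True] that unfolding I_def by auto
    next
      case False
      then have "t = 2*pi" using t0 by simp
      moreover have "Xp N (N - 1) \<le> 2*pi" using Xp_mono[of "N-1" N N] Xp_N[OF N] by simp
      moreover have "Suc (N - 1) = N" using N by simp
      ultimately show ?thesis using that[of "N - 1"] N Xp_N[OF N] unfolding I_def by auto
    qed
    have "t \<in> {Xp N i..Xp N (Suc i)}" using i(2) unfolding I_def .
    then have "\<not> badp k a N i" using t0(3) unfolding badp_def by fastforce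
    then have "i \<in> S" using i(1) unfolding S_def Gs_def Ms_def by auto
    then show "t \<in> (\<Union>i\<in>S. I i)" using i(2) by blast
  qed
  have Usub: "(\<Union>i\<in>S. I i) \<subseteq> {0..2*pi}"
  proof -
    have "I i \<subseteq> {0..2*pi}" if "i \<in> S" for i
    proof -
      have "i < N" using that unfolding S_def Gs_def Ms_def by auto
      then have "Xp N (Suc i) \<le> 2*pi" using Xp_mono[of "Suc i" N N] Xp_N[OF N] by simp
      moreover have "0 \<le> Xp N i" unfolding Xp_def by simp
      ultimately show ?thesis unfolding I_def by auto
    qed
    then show ?thesis by blast
  qed
  have Umeas: "(\<Union>i\<in>S. I i) \<in> sets lborel" using finS unfolding I_def by (intro sets.finite_UN) auto
  have Ufm: "(\<Union>i\<in>S. I i) \<in> fmeasurable lborel" by (rule fmeasurableI2[OF Icc_fmeas Usub Umeas])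
  have "measure lborel (Kset k a) \<le> measure lborel (\<Union>i\<in>S. I i)"
    by (rule measure_mono_fmeasurable[OF sub Kset_borel Ufm])
  also have "\<dots> \<le> (\<Sum>i\<in>S. measure lborel (I i))" using finS unfolding I_def by (intro measure_UNION_le) auto
  also have "\<dots> = (\<Sum>i\<in>S. 2*pi / real N)"
  proof (rule sum.cong[OF refl])
    fix i show "measure lborel (I i) = 2*pi / real N" unfolding I_def
      using Xp_mono[of i "Suc i" N] Xp_Suc[of N i] by simp
  qed
  also have "\<dots> = real (card S) * (2*pi / real N)" by simp
  also have "card S = card (Gs k a N) + card (Ms k a N)" unfolding S_def
    by (rule card_Un_disjoint) (auto simp: Gs_def Ms_def)
  finally show ?thesis by simp
qed

lemma measure_lower:
  assumes N: "N \<ge> 1"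
  shows "real (card (Gs k a N)) * (2*pi / real N) \<le> measure lborel (Kset k a)"
proof -
  define I where "I i = {Xp N i..<Xp N (Suc i)}" for i
  define S where "S = Gs k a N"
  have finS: "finite S" unfolding S_def Gs_def by simp
  have sub: "(\<Union>i\<in>S. I i) \<subseteq> Kset k a"
  proof
    fix t assume "t \<in> (\<Union>i\<in>S. I i)"
    then obtain i where i: "i \<in> S" "t \<in> I i" by blast
    have iN: "i < N" using i(1) unfolding S_def Gs_def by auto
    then have "Xp N (Suc i) \<le> 2*pi" using Xp_mono[of "Suc i" N N] Xp_N[OF N] by simp
    moreover have "0 \<le> Xp N i" unfolding Xp_def by simp
    moreover have "goodp k a N i" using i(1) unfolding S_def Gs_def by auto
    ultimately show "t \<in> Kset k a" using i(2) unfolding I_def Kset_def goodp_def by auto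
  qed
  have Kfm: "Kset k a \<in> fmeasurable lborel"
    by (rule fmeasurableI2[OF Icc_fmeas[of 0 "2*pi"] _ Kset_borel]) (auto simp: Kset_def)
  have fmI: "I i \<in> fmeasurable lborel" for i
    unfolding I_def by (rule fmeasurableI2[OF Icc_fmeas, of _ "Xp N i" "Xp N (Suc i)"]) auto
  have disj: "pairwise (\<lambda>i j. disjnt (I i) (I j)) S"
  proof (rule pairwiseI)
    fix i j assume "i \<in> S" "j \<in> S" "i \<noteq> j"
    then consider "Suc i \<le> j" | "Suc j \<le> i" by linarith
    then show "disjnt (I i) (I j)"
    proof cases
      case 1 then have "Xp N (Suc i) \<le> Xp N j" by (rule Xp_mono)
      then show ?thesis unfolding I_def disjnt_def by auto
    next
      case 2 then have "Xp N (Suc j) \<le> Xp N i" by (rule Xp_mono)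
      then show ?thesis unfolding I_def disjnt_def by auto
    qed
  qed
  have "real (card S) * (2*pi / real N) = (\<Sum>i\<in>S. measure lborel (I i))"
  proof -
    have "measure lborel (I i) = 2*pi / real N" for i unfolding I_def
      using Xp_mono[of i "Suc i" N] Xp_Suc[of N i] by simp
    then show ?thesis by simp
  qed
  also have "\<dots> = measure lborel (\<Union>i\<in>S. I i)" by (rule measure_UNION'[symmetric, OF finS fmI disj])
  also have "\<dots> \<le> measure lborel (Kset k a)"
    by (rule measure_mono_fmeasurable[OF sub _ Kfm]) (use finS fmI in \<open>auto intro!: sets.finite_UN simp: fmeasurable_def\<close>)
  finally show ?thesis unfolding S_def .
qed

lemma U_bounds:
  assumes n: "n > k" and N: "N \<ge> 1" and nM: "real n \<ge> 2 * (M1 k a + M2 k a) + 1"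
    and eta: "0 < \<eta>" "\<eta> \<le> 1/2" "real n * \<eta> > M1 k a"
    "\<forall>i\<in>Gs k a N. \<forall>t\<in>{Xp N i..Xp N (Suc i)}. \<bar>f2 k a t\<bar> \<le> 1 - \<eta>"
  defines "c \<equiv> real n * (2*pi / real N) / pi"
  shows "real (card (Gs k a N)) * (c - 2) \<le> real (zeros_on (P2n k a n))"
    and "real (zeros_on (P2n k a n)) \<le> real (card (Gs k a N)) * (c + 3) + real (card (Ms k a N)) * (2 * (c + 3))"
proof -
  define U where "U i = real (Ucnt k a n (Tab k a n (Xp N i) (Xp N (Suc i))))" for i
  define R where "R = {i. i < N \<and> \<not> goodp k a N i \<and> badp k a N i}"
  have Z: "real (zeros_on (P2n k a n)) = (\<Sum>i<N. U i)"
    unfolding sum_pieces[OF n N] U_def by simp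
  have split: "{..<N} = Gs k a N \<union> Ms k a N \<union> R" unfolding Gs_def Ms_def R_def by auto
  have fG: "finite (Gs k a N)" and fM: "finite (Ms k a N)" and fR: "finite R" unfolding Gs_def Ms_def R_def by auto
  have sum_split: "(\<Sum>i<N. U i) = (\<Sum>i\<in>Gs k a N. U i) + (\<Sum>i\<in>Ms k a N. U i) + (\<Sum>i\<in>R. U i)"
    unfolding split using fG fM fR
    by (subst sum.union_disjoint, simp_all, (auto simp: Gs_def Ms_def R_def)[1],
        subst sum.union_disjoint, simp_all, auto simp: Gs_def Ms_def R_def)
  have len: "Xp N (Suc i) - Xp N i = 2*pi / real N" for i by (rule Xp_Suc)
  have le: "Xp N i \<le> Xp N (Suc i)" for i by (rule Xp_mono) simp
  have R0: "U i = 0" if "i \<in> R" for i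
  proof -
    have "badp k a N i" using that unfolding R_def by simp
    then have "Tab k a n (Xp N i) (Xp N (Suc i)) = {}" unfolding badp_def by (intro piece_bad) simp
    then show ?thesis unfolding U_def Ucnt_def by simp
  qed
  have Gl: "U i \<ge> c - 2" if "i \<in> Gs k a N" for i
  proof -
    have iN: "i < N" and g: "goodp k a N i" using that unfolding Gs_def by auto
    have "Xp N (Suc i) \<le> 2*pi" using Xp_mono[of "Suc i" N N] Xp_N[OF N] iN by simp
    moreover have "0 \<le> Xp N i" unfolding Xp_def by simp
    ultimately have "real (Ucnt k a n (Tab k a n (Xp N i) (Xp N (Suc i)))) \<ge> real n * (Xp N (Suc i) - Xp N i) / pi - 2"
      using g le[of i] unfolding goodp_def by (intro piece_lower_good[OF n]) auto
    then show ?thesis unfolding U_def c_def len .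
  qed
  have Gu: "U i \<le> c + 3" if "i \<in> Gs k a N" for i
    using piece_upper_good[OF n nM le eta(1-3)] eta(4) that len unfolding U_def c_def by simp
  have Mu: "U i \<le> 2 * (c + 3)" for i
    using piece_upper[OF n nM le] len unfolding U_def c_def by simp
  have U0: "U i \<ge> 0" for i unfolding U_def by simp
  show "real (card (Gs k a N)) * (c - 2) \<le> real (zeros_on (P2n k a n))"
  proof -
    have "real (card (Gs k a N)) * (c - 2) = (\<Sum>i\<in>Gs k a N. c - 2)" by simp
    also have "\<dots> \<le> (\<Sum>i\<in>Gs k a N. U i)" using Gl by (rule sum_mono)
    also have "\<dots> \<le> (\<Sum>i<N. U i)" unfolding sum_split using U0 by (simp add: sum_nonneg)
    finally show ?thesis unfolding Z .
  qed
  show "real (zeros_on (P2n k a n)) \<le> real (card (Gs k a N)) * (c + 3) + real (card (Ms k a N)) * (2 * (c + 3))"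
  proof -
    have "(\<Sum>i\<in>Gs k a N. U i) \<le> (\<Sum>i\<in>Gs k a N. c + 3)" using Gu by (rule sum_mono)
    moreover have "(\<Sum>i\<in>Ms k a N. U i) \<le> (\<Sum>i\<in>Ms k a N. 2 * (c + 3))" using Mu by (intro sum_mono)
    moreover have "(\<Sum>i\<in>R. U i) = 0" using R0 by simp
    ultimately show ?thesis unfolding Z sum_split by simp
  qed
qed


lemma u_conv:
  fixes k :: nat and a :: "nat \<Rightarrow> int"
  assumes "\<exists>j\<in>{1..k}. a j \<noteq> 0"
  shows "(\<lambda>n. real (zeros_on (P2n k a n)) / (2 * real n)) \<longlonglongrightarrow> measure lborel (Kset k a) / (2*pi)"
proof (rule LIMSEQ_I)
  fix r :: real assume r: "0 < r"
  define \<Lambda> where "\<Lambda> = real (card (Lset k a))"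
  have finL: "finite (Lset k a)" by (rule finite_Lset[OF assms])
  have L0: "\<Lambda> \<ge> 0" unfolding \<Lambda>_def by simp
  define N where "N = nat \<lceil>16 * \<Lambda> / r\<rceil> + 1"
  have N1: "N \<ge> 1" unfolding N_def by simp
  have NN0: "real N > 0" using N1 by simp
  have NL: "\<Lambda> / real N \<le> r / 16"
  proof -
    have "16 * \<Lambda> / r \<le> real N" unfolding N_def using real_nat_ceiling_ge[of "16 * \<Lambda> / r"] by simp
    then have "16 * \<Lambda> \<le> real N * r" using r by (simp add: field_simps)
    then show ?thesis using NN0 r by (simp add: field_simps)
  qed
  obtain \<eta> where eta: "0 < \<eta>" "\<eta> \<le> 1/2" "\<forall>i\<in>Gs k a N. \<forall>t\<in>{Xp N i..Xp N (Suc i)}. \<bar>f2 k a t\<bar> \<le> 1 - \<eta>"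
    using eta_exists[of k a N] by blast
  define B where "B = max (max (real k + 1) (2 * (M1 k a + M2 k a) + 1)) (max (M1 k a / \<eta> + 1) (max (8 * real N / r) (32 * \<Lambda> / r + 1)))"
  show "\<exists>no. \<forall>n\<ge>no. norm (real (zeros_on (P2n k a n)) / (2 * real n) - measure lborel (Kset k a) / (2*pi)) < r"
  proof (intro exI allI impI)
    fix n assume "n \<ge> nat \<lceil>B\<rceil>"
    then have "real (nat \<lceil>B\<rceil>) \<le> real n" by (simp only: of_nat_le_iff)
    then have nB: "real n \<ge> B" using real_nat_ceiling_ge[of B] by linarith
    define nn where "nn = real n"
    define NN where "NN = real N"
    have nk: "n > k" using nB unfolding B_def by simp
    have nM: "real n \<ge> 2 * (M1 k a + M2 k a) + 1" using nB unfolding B_def by simp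
    have nn0: "nn > 0" using nk unfolding nn_def by simp
    have neta: "real n * \<eta> > M1 k a"
    proof -
      have "real n \<ge> M1 k a / \<eta> + 1" using nB unfolding B_def by simp
      then have "real n > M1 k a / \<eta>" by simp
      then show ?thesis using eta(1) by (simp add: field_simps)
    qed
    have Nn: "NN / nn \<le> r / 8"
    proof -
      have "nn \<ge> 8 * NN / r" using nB unfolding B_def nn_def NN_def by simp
      then have "8 * NN \<le> nn * r" using r by (simp add: field_simps)
      then show ?thesis using nn0 r by (simp add: field_simps)
    qed
    have Ln: "\<Lambda> / nn \<le> r / 32"
    proof -
      have "nn \<ge> 32 * \<Lambda> / r" using nB unfolding B_def nn_def by simp
      then have "32 * \<Lambda> \<le> nn * r" using r by (simp add: field_simps)
      then show ?thesis using nn0 r by (simp add: field_simps)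
    qed
    define G where "G = real (card (Gs k a N))"
    define X where "X = real (card (Ms k a N))"
    define U where "U = real (zeros_on (P2n k a n))"
    define m where "m = measure lborel (Kset k a)"
    have c: "real n * (2*pi / real N) / pi = 2 * nn / NN" unfolding nn_def NN_def by simp
    have A: "G * (2 * nn / NN - 2) \<le> U"
      using U_bounds(1)[OF nk N1 nM eta(1,2) neta eta(3)] unfolding c G_def U_def .
    have Bd: "U \<le> G * (2 * nn / NN + 3) + X * (2 * (2 * nn / NN + 3))"
      using U_bounds(2)[OF nk N1 nM eta(1,2) neta eta(3)] unfolding c G_def U_def X_def .
    have GN: "G \<le> NN"
    proof -
      have "Gs k a N \<subseteq> {..<N}" unfolding Gs_def by auto
      then have "card (Gs k a N) \<le> N" using card_mono[of "{..<N}"] by fastforce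
      then show ?thesis unfolding G_def NN_def by simp
    qed
    have XL: "X \<le> 2 * \<Lambda>" using mixed_count[OF N1 finL] unfolding X_def \<Lambda>_def by simp
    have G0: "G \<ge> 0" and X0: "X \<ge> 0" unfolding G_def X_def by simp_all
    have m1: "G * (2*pi / NN) \<le> m" using measure_lower[OF N1, of k a] unfolding G_def m_def NN_def .
    have m2: "m \<le> (G + X) * (2*pi / NN)" using measure_upper[OF N1, of k a] unfolding G_def X_def m_def NN_def .
    have mu1: "G / NN \<le> m / (2*pi)"
    proof -
      have "G / NN = G * (2*pi / NN) / (2*pi)" by simp
      also have "\<dots> \<le> m / (2*pi)" using m1 by (intro divide_right_mono) auto
      finally show ?thesis .
    qed
    have mu2: "m / (2*pi) \<le> G / NN + X / NN"
    proof -
      have "m / (2*pi) \<le> (G + X) * (2*pi / NN) / (2*pi)" using m2 by (intro divide_right_mono) auto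
      also have "\<dots> = G / NN + X / NN" by (simp add: add_divide_distrib)
      finally show ?thesis .
    qed
    have u1: "G / NN - G / nn \<le> U / (2 * nn)"
    proof -
      have "G / NN - G / nn = G * (2 * nn / NN - 2) / (2 * nn)" using nn0 NN0 unfolding NN_def
        by (simp add: field_simps)
      also have "\<dots> \<le> U / (2 * nn)" using A nn0 by (intro divide_right_mono) auto
      finally show ?thesis .
    qed
    have u2: "U / (2 * nn) \<le> G / NN + 3/2 * (G / nn) + 2 * (X / NN) + 3 * (X / nn)"
    proof -
      have "U / (2 * nn) \<le> (G * (2 * nn / NN + 3) + X * (2 * (2 * nn / NN + 3))) / (2 * nn)"
        using Bd nn0 by (intro divide_right_mono) auto
      also have "\<dots> = G / NN + 3/2 * (G / nn) + 2 * (X / NN) + 3 * (X / nn)" using nn0 NN0 unfolding NN_def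
        by (simp add: field_simps)
      finally show ?thesis .
    qed
    have b1: "G / nn \<le> NN / nn" using GN nn0 by (intro divide_right_mono) auto
    have b2: "X / NN \<le> 2 * (\<Lambda> / NN)" using XL NN0 unfolding NN_def by (simp add: divide_right_mono)
    have b3: "X / nn \<le> 2 * (\<Lambda> / nn)" using XL nn0 by (simp add: divide_right_mono)
    have NL': "\<Lambda> / NN \<le> r / 16" using NL unfolding NN_def .
    have "\<bar>U / (2 * nn) - m / (2*pi)\<bar> < r"
      using u1 u2 mu1 mu2 b1 b2 b3 NL' Nn Ln r by (simp add: abs_less_iff)
    then show "norm (real (zeros_on (P2n k a n)) / (2 * real n) - measure lborel (Kset k a) / (2*pi)) < r"
      unfolding U_def nn_def m_def by simp
  qed
qed


theorem mainTheorem2: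
  fixes k :: nat and a :: "nat \<Rightarrow> int"
  assumes "k > 0" and "\<exists>j\<in>{1..k}. a j \<noteq> 0"
  shows "(\<lambda>n. Cratio n (P2n k a n)) \<longlonglongrightarrow>
           measure lebesgue {t \<in> {0..2*pi}. \<bar>f2 k a t\<bar> \<ge> 1} / (2*pi)"
proof -
  define m where "m = measure lborel (Kset k a)"
  have S: "{t \<in> {0..2*pi}. \<bar>f2 k a t\<bar> \<ge> 1} = {0..2*pi} - Kset k a" unfolding Kset_def by auto
  have Ssets: "{0..2*pi} - Kset k a \<in> sets lborel" using Kset_borel[of k a] by auto
  have "measure lebesgue {t \<in> {0..2*pi}. \<bar>f2 k a t\<bar> \<ge> 1} = measure lborel ({0..2*pi} - Kset k a)"
    unfolding S using Ssets by (simp add: measure_completion)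
  also have "\<dots> = measure lborel {0..2*pi} - measure lborel (Kset k a)"
    by (rule measure_Diff) (use Kset_borel[of k a] in \<open>auto simp: Kset_def\<close>)
  also have "\<dots> = 2*pi - m" unfolding m_def by simp
  finally have meq: "measure lebesgue {t \<in> {0..2*pi}. \<bar>f2 k a t\<bar> \<ge> 1} / (2*pi) = 1 - m / (2*pi)"
    by (simp add: diff_divide_distrib)
  have lim: "(\<lambda>n. 1 - real (zeros_on (P2n k a n)) / (2 * real n)) \<longlonglongrightarrow> 1 - m / (2*pi)"
    unfolding m_def by (intro tendsto_diff tendsto_const u_conv[OF assms(2)])
  have ev: "eventually (\<lambda>n. 1 - real (zeros_on (P2n k a n)) / (2 * real n) = Cratio n (P2n k a n)) sequentially"
    using eventually_gt_at_top[of k] by eventually_elim (simp add: Cratio_eq)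
  show ?thesis unfolding meq by (rule Lim_transform_eventually[OF lim ev])
qed

end
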